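(* Let $\mathsf{X}$ be a finite connected graph with no tails, with ramified vertices at least one of which is totally ramified, and suppose $\mathsf{X}$ has a segment decomposition with segments $\mathsf{S}^1,\dots,\mathsf{S}^k$ (2-segments $\mathsf{S}^1,\dots,\mathsf{S}^{k'}$ and 1-segments $\mathsf{S}^{k'+1},\dots,\mathsf{S}^k$), $\mathsf{S}^i$ having $t_i$ ramified vertices. Let $\mathsf{X}_n$ be the $n$-th layer of the corresponding $\mathbb{Z}_p$-tower with trivial voltage assignment. Let $n_0$ be large enough that the number of vertices of $\mathsf{X}_n$ lying over ramified vertices of $\mathsf{X}$ is constant for $n\ge n_0$, and denote this number by $l$. Then for $n\ge n_0$, \[\kappa(\mathsf{X}_n)=\kappa(\mathsf{X}_{n_0})\,p^{(n-n_0)(l-1)}\prod_{i=1}^k F_{t_i}(\mathsf{S}^i)^{p^n-p^{n_0}}.\]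
   Context: Graphs are finite and undirected, possibly with multiple edges and loops; $\kappa$ = number of spanning trees. Tails, admissible paths, segment decompositions: a tail is an unramified vertex with exactly one neighbour joined by exactly one edge; an admissible path between ramified $v,v'$ has all intermediate vertices unramified. Admissible paths between distinct ramified vertices sharing an edge are grouped together; a decomposition requires each group to join one pair of ramified vertices, and groups give the 2-segments; the remaining edges lie on admissible closed paths at a single ramified vertex outside the 2-segments, grouped likewise into 1-segments; segments are edge-disjoint, share no unramified vertex and cover $\mathsf{X}$. $F_t(\mathsf{S})$ ($t\in\{1,2\}$) is the number of spanning forests of $\mathsf{S}$ with $t$ trees each containing exactly one ramified vertex. Tower: $\Gamma\cong\mathbb{Z}_p$, $\Gamma_n=\Gamma/\Gamma^{p^n}$, trivial voltage assignment; each vertex $v$ has a closed subgroup $I_v\subseteq\Gamma$, $v$ ramified iff $I_v\ne1$, totally ramified iff $I_v=\Gamma$. $\mathsf{X}_n$ has vertex set $\bigsqcup_v\{v\}\times\Gamma_n/\pi_n(I_v)$ and directed edges $\mathbf{E}(\mathsf{X})\times\Gamma_n$, $(e,g)$ joining $(o(e),g\pi_n(I_{o(e)}))$ to $(t(e),g\pi_n(I_{t(e)}))$; all $\mathsf{X}_n$ are connected. *)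

theory Defs
  imports Main "HOL-Library.Extended_Nat" "HOL-Computational_Algebra.Primes"
begin

text \<open>A graph is given by a vertex set V, an (undirected) edge set E and a map
  ends assigning to every edge its two endpoints (an edge e with
  ends e = (a,a) is a loop; several edges may share the same endpoints).\<close>

definition adj :: "('e \<Rightarrow> 'v \<times> 'v) \<Rightarrow> 'e set \<Rightarrow> ('v \<times> 'v) set" where
  "adj ends T = {(a,b). \<exists>e\<in>T. ends e = (a,b) \<or> ends e = (b,a)}"

definition reach :: "('e \<Rightarrow> 'v \<times> 'v) \<Rightarrow> 'e set \<Rightarrow> ('v \<times> 'v) set" where
  "reach ends T = (adj ends T)\<^sup>*"

definition is_graph :: "'v set \<Rightarrow> 'e set \<Rightarrow> ('e \<Rightarrow> 'v \<times> 'v) \<Rightarrow> bool" where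
  "is_graph V E ends \<longleftrightarrow> finite V \<and> finite E \<and> (\<forall>e\<in>E. ends e \<in> V \<times> V)"

definition connected_graph :: "'v set \<Rightarrow> 'e set \<Rightarrow> ('e \<Rightarrow> 'v \<times> 'v) \<Rightarrow> bool" where
  "connected_graph V E ends \<longleftrightarrow> V \<noteq> {} \<and> (\<forall>a\<in>V. \<forall>b\<in>V. (a,b) \<in> reach ends E)"

text \<open>An edge set is a forest (acyclic) iff no edge lies on a cycle, i.e. the
  endpoints of any of its edges are not joined by the remaining edges
  (in particular a forest contains no loops).\<close>
definition forest :: "('e \<Rightarrow> 'v \<times> 'v) \<Rightarrow> 'e set \<Rightarrow> bool" where
  "forest ends T \<longleftrightarrow> (\<forall>e\<in>T. ends e \<notin> reach ends (T - {e}))"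

definition spanning_tree :: "'v set \<Rightarrow> 'e set \<Rightarrow> ('e \<Rightarrow> 'v \<times> 'v) \<Rightarrow> 'e set \<Rightarrow> bool" where
  "spanning_tree V E ends T \<longleftrightarrow>
     T \<subseteq> E \<and> forest ends T \<and> (\<forall>a\<in>V. \<forall>b\<in>V. (a,b) \<in> reach ends T)"

definition kappa :: "'v set \<Rightarrow> 'e set \<Rightarrow> ('e \<Rightarrow> 'v \<times> 'v) \<Rightarrow> nat" where
  "kappa V E ends = card {T. spanning_tree V E ends T}"

text \<open>The closed subgroups of \<open>\<Gamma> \<cong> \<int>\<^sub>p\<close> are the trivial subgroup and the
  subgroups \<open>\<Gamma>\<^bsup>p^k\<^esup>\<close>, \<open>k \<in> \<nat>\<close>. We encode the inertia group \<open>I\<^sub>v\<close> by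
  \<open>m v :: enat\<close>: \<open>I\<^sub>v = \<Gamma>\<^bsup>p^(m v)\<^esup>\<close> if \<open>m v\<close> is finite and \<open>I\<^sub>v = 1\<close> if
  \<open>m v = \<infinity>\<close>.\<close>

definition ramified :: "('v \<Rightarrow> enat) \<Rightarrow> 'v \<Rightarrow> bool" where
  "ramified m v \<longleftrightarrow> m v \<noteq> \<infinity>"

definition totally_ramified :: "('v \<Rightarrow> enat) \<Rightarrow> 'v \<Rightarrow> bool" where
  "totally_ramified m v \<longleftrightarrow> m v = 0"

definition is_tail :: "'v set \<Rightarrow> 'e set \<Rightarrow> ('e \<Rightarrow> 'v \<times> 'v) \<Rightarrow> ('v \<Rightarrow> enat) \<Rightarrow> 'v \<Rightarrow> bool" where
  "is_tail V E ends m v \<longleftrightarrow> v \<in> V \<and> \<not> ramified m v \<and>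
     (\<exists>e\<in>E. fst (ends e) \<noteq> snd (ends e) \<and>
        {e'\<in>E. fst (ends e') = v \<or> snd (ends e') = v} = {e} \<and>
        (fst (ends e) = v \<or> snd (ends e) = v))"

definition adm_path :: "'e set \<Rightarrow> ('e \<Rightarrow> 'v \<times> 'v) \<Rightarrow> ('v \<Rightarrow> enat) \<Rightarrow> 'e list \<times> 'v list \<Rightarrow> bool" where
  "adm_path E ends m P \<longleftrightarrow> (case P of (es, vs) \<Rightarrow>
     es \<noteq> [] \<and> length vs = length es + 1 \<and> set es \<subseteq> E \<and> distinct es \<and>
     (\<forall>i<length es. ends (es!i) = (vs!i, vs!Suc i) \<or> ends (es!i) = (vs!Suc i, vs!i)) \<and>
     ramified m (hd vs) \<and> ramified m (last vs) \<and>
     distinct (butlast (tl vs)) \<and> (\<forall>w\<in>set (butlast (tl vs)). \<not> ramified m w))"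

definition path_edges :: "'e list \<times> 'v list \<Rightarrow> 'e set" where
  "path_edges P = set (fst P)"

definition path_ends :: "'e list \<times> 'v list \<Rightarrow> 'v set" where
  "path_ends P = {hd (snd P), last (snd P)}"

definition share_rel :: "('e list \<times> 'v list) set \<Rightarrow> (('e list \<times> 'v list) \<times> ('e list \<times> 'v list)) set" where
  "share_rel Ps = {(P,Q). P \<in> Ps \<and> Q \<in> Ps \<and> path_edges P \<inter> path_edges Q \<noteq> {}}"

definition path_groups :: "('e list \<times> 'v list) set \<Rightarrow> ('e list \<times> 'v list) set set" where
  "path_groups Ps = Ps // ((share_rel Ps)\<^sup>+)"

definition group_edges :: "('e list \<times> 'v list) set \<Rightarrow> 'e set" where
  "group_edges G = (\<Union>P\<in>G. path_edges P)"

definition two_paths :: "'e set \<Rightarrow> ('e \<Rightarrow> 'v \<times> 'v) \<Rightarrow> ('v \<Rightarrow> enat) \<Rightarrow> ('e list \<times> 'v list) set" where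
  "two_paths E ends m = {P. adm_path E ends m P \<and> hd (snd P) \<noteq> last (snd P)}"

definition segs2 :: "'e set \<Rightarrow> ('e \<Rightarrow> 'v \<times> 'v) \<Rightarrow> ('v \<Rightarrow> enat) \<Rightarrow> 'e set set" where
  "segs2 E ends m = group_edges ` path_groups (two_paths E ends m)"

definition one_paths :: "'e set \<Rightarrow> ('e \<Rightarrow> 'v \<times> 'v) \<Rightarrow> ('v \<Rightarrow> enat) \<Rightarrow> ('e list \<times> 'v list) set" where
  "one_paths E ends m = {P. adm_path E ends m P \<and> hd (snd P) = last (snd P) \<and>
      path_edges P \<subseteq> E - \<Union>(segs2 E ends m)}"

definition segs1 :: "'e set \<Rightarrow> ('e \<Rightarrow> 'v \<times> 'v) \<Rightarrow> ('v \<Rightarrow> enat) \<Rightarrow> 'e set set" where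
  "segs1 E ends m = group_edges ` path_groups (one_paths E ends m)"

definition segments :: "'e set \<Rightarrow> ('e \<Rightarrow> 'v \<times> 'v) \<Rightarrow> ('v \<Rightarrow> enat) \<Rightarrow> 'e set set" where
  "segments E ends m = segs2 E ends m \<union> segs1 E ends m"

definition edge_verts :: "('e \<Rightarrow> 'v \<times> 'v) \<Rightarrow> 'e set \<Rightarrow> 'v set" where
  "edge_verts ends S = fst ` ends ` S \<union> snd ` ends ` S"

definition has_segment_decomposition ::
  "'v set \<Rightarrow> 'e set \<Rightarrow> ('e \<Rightarrow> 'v \<times> 'v) \<Rightarrow> ('v \<Rightarrow> enat) \<Rightarrow> bool" where
  "has_segment_decomposition V E ends m \<longleftrightarrow>
     (\<forall>G\<in>path_groups (two_paths E ends m). \<exists>v v'. \<forall>P\<in>G. path_ends P = {v, v'}) \<and>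
     (\<forall>e\<in>E - \<Union>(segs2 E ends m). \<exists>P\<in>one_paths E ends m. e \<in> path_edges P) \<and>
     (\<forall>G\<in>path_groups (one_paths E ends m). \<exists>v. \<forall>P\<in>G. path_ends P = {v}) \<and>
     (\<forall>S\<in>segments E ends m. \<forall>S'\<in>segments E ends m. S \<noteq> S' \<longrightarrow>
         S \<inter> S' = {} \<and> edge_verts ends S \<inter> edge_verts ends S' \<subseteq> {v. ramified m v}) \<and>
     \<Union>(segments E ends m) = E \<and>
     (\<Union>S\<in>segments E ends m. edge_verts ends S) = V"

definition seg_t :: "('e \<Rightarrow> 'v \<times> 'v) \<Rightarrow> ('v \<Rightarrow> enat) \<Rightarrow> 'e set \<Rightarrow> nat" where
  "seg_t ends m S = card {v \<in> edge_verts ends S. ramified m v}"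

definition forest_components :: "('e \<Rightarrow> 'v \<times> 'v) \<Rightarrow> 'v set \<Rightarrow> 'e set \<Rightarrow> 'v set set" where
  "forest_components ends W T = (\<lambda>a. reach ends T `` {a}) ` W"

definition F_count :: "('e \<Rightarrow> 'v \<times> 'v) \<Rightarrow> ('v \<Rightarrow> enat) \<Rightarrow> nat \<Rightarrow> 'e set \<Rightarrow> nat" where
  "F_count ends m t S = card {T. T \<subseteq> S \<and> forest ends T \<and>
      card (forest_components ends (edge_verts ends S) T) = t \<and>
      (\<forall>C\<in>forest_components ends (edge_verts ends S) T. card {v\<in>C. ramified m v} = 1)}"

text \<open>\<open>\<Gamma>\<^sub>n = \<int>/p^n\<close> is represented by {0..<p^n}; the image of \<open>I\<^sub>v\<close> in \<open>\<Gamma>\<^sub>n\<close> is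
  \<open>p^(min (m v) n) \<Gamma>\<^sub>n\<close>, so \<open>\<Gamma>\<^sub>n/\<pi>\<^sub>n(I\<^sub>v) \<cong> \<int>/p^(min (m v) n)\<close>, represented by
  residues mod p^(ram_exp m n v).\<close>
definition ram_exp :: "('v \<Rightarrow> enat) \<Rightarrow> nat \<Rightarrow> 'v \<Rightarrow> nat" where
  "ram_exp m n v = (case m v of \<infinity> \<Rightarrow> n | enat k \<Rightarrow> min k n)"

definition layer_verts :: "nat \<Rightarrow> 'v set \<Rightarrow> ('v \<Rightarrow> enat) \<Rightarrow> nat \<Rightarrow> ('v \<times> nat) set" where
  "layer_verts p V m n = {(v, a). v \<in> V \<and> a < p ^ ram_exp m n v}"

definition layer_edges :: "nat \<Rightarrow> 'e set \<Rightarrow> nat \<Rightarrow> ('e \<times> nat) set" where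
  "layer_edges p E n = E \<times> {0..<p ^ n}"

definition layer_ends :: "nat \<Rightarrow> ('e \<Rightarrow> 'v \<times> 'v) \<Rightarrow> ('v \<Rightarrow> enat) \<Rightarrow> nat \<Rightarrow> 'e \<times> nat \<Rightarrow> ('v \<times> nat) \<times> ('v \<times> nat)" where
  "layer_ends p ends m n eg = (case eg of (e, g) \<Rightarrow>
     ((fst (ends e), g mod p ^ ram_exp m n (fst (ends e))),
      (snd (ends e), g mod p ^ ram_exp m n (snd (ends e)))))"

definition kappa_layer :: "nat \<Rightarrow> 'v set \<Rightarrow> 'e set \<Rightarrow> ('e \<Rightarrow> 'v \<times> 'v) \<Rightarrow> ('v \<Rightarrow> enat) \<Rightarrow> nat \<Rightarrow> nat" where
  "kappa_layer p V E ends m n = kappa (layer_verts p V m n) (layer_edges p E n) (layer_ends p ends m n)"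

end

theory Submission
  imports Defs "HOL-Library.FuncSet"
begin

lemma adj_sym: "(x,y) \<in> adj ends T \<Longrightarrow> (y,x) \<in> adj ends T"
  unfolding adj_def by auto

lemma adj_mono: "T \<subseteq> T' \<Longrightarrow> adj ends T \<subseteq> adj ends T'"
  unfolding adj_def by auto

lemma reach_refl[simp]: "(x,x) \<in> reach ends T"
  unfolding reach_def by simp

lemma reach_sym: "(x,y) \<in> reach ends T \<Longrightarrow> (y,x) \<in> reach ends T"
  unfolding reach_def
proof (induction rule: rtrancl_induct)
  case base then show ?case by simp
next
  case (step y z)
  then show ?case by (meson adj_sym converse_rtrancl_into_rtrancl)
qed

lemma reach_trans: "(x,y) \<in> reach ends T \<Longrightarrow> (y,z) \<in> reach ends T \<Longrightarrow> (x,z) \<in> reach ends T"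
  unfolding reach_def by (rule rtrancl_trans)

lemma reach_mono: "T \<subseteq> T' \<Longrightarrow> reach ends T \<subseteq> reach ends T'"
  unfolding reach_def by (simp add: adj_mono rtrancl_mono)

lemma reach_edge: "e \<in> T \<Longrightarrow> ends e \<in> reach ends T"
  unfolding reach_def adj_def by (cases "ends e") auto

lemma reach_edge': "e \<in> T \<Longrightarrow> ends e = (x,y) \<Longrightarrow> (y,x) \<in> reach ends T"
  using reach_edge reach_sym by metis

lemma reach_empty: "reach ends {} = Id"
  unfolding reach_def adj_def by simp

lemma adj_insert: "adj ends (insert e T) = adj ends T \<union> {ends e, prod.swap (ends e)}"
  unfolding adj_def by (cases "ends e") auto

lemma reach_insert_pt:
  assumes "ends e = (a,b)"
  shows "(x,y) \<in> reach ends (insert e T) \<longleftrightarrow> (x,y) \<in> reach ends T \<or>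
    ((x,a) \<in> reach ends T \<and> (b,y) \<in> reach ends T) \<or> ((x,b) \<in> reach ends T \<and> (a,y) \<in> reach ends T)"
proof -
  define R0 where "R0 = reach ends T"
  have tr: "\<And>u v w. (u,v)\<in>R0 \<Longrightarrow> (v,w)\<in>R0 \<Longrightarrow> (u,w)\<in>R0"
    unfolding R0_def by (rule reach_trans)
  have sy: "\<And>u v. (u,v)\<in>R0 \<Longrightarrow> (v,u)\<in>R0"
    unfolding R0_def by (rule reach_sym)
  have rf: "\<And>u. (u,u)\<in>R0" unfolding R0_def by simp
  have adjR: "\<And>u v. (u,v) \<in> adj ends T \<Longrightarrow> (u,v) \<in> R0"
    unfolding R0_def reach_def by auto
  have "(x,y) \<in> R0 \<or> ((x,a) \<in> R0 \<and> (b,y) \<in> R0) \<or> ((x,b) \<in> R0 \<and> (a,y) \<in> R0)"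
    if "(x,y) \<in> reach ends (insert e T)"
    using that unfolding reach_def
  proof (induction rule: rtrancl_induct)
    case base then show ?case using rf by simp
  next
    case (step y z)
    have "(y,z) \<in> adj ends T \<or> (y,z) = (a,b) \<or> (y,z) = (b,a)"
      using step(2) assms unfolding adj_insert by auto
    then have "(y,z) \<in> R0 \<or> (y = a \<and> z = b) \<or> (y = b \<and> z = a)" using adjR by blast
    then show ?case
    proof (elim disjE)
      assume h: "(y,z) \<in> R0"
      show ?case using step(3) h tr by blast
    next
      assume h: "y = a \<and> z = b"
      show ?case using step(3) h tr sy rf by blast
    next
      assume h: "y = b \<and> z = a"
      show ?case using step(3) h tr sy rf by blast
    qed
  qed
  moreover
  have m: "R0 \<subseteq> reach ends (insert e T)" unfolding R0_def by (rule reach_mono) auto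
  have ab: "(a,b) \<in> reach ends (insert e T)" using reach_edge[of e "insert e T" ends] assms by simp
  have ba: "(b,a) \<in> reach ends (insert e T)" using reach_sym[OF ab] .
  have "(x,y) \<in> reach ends (insert e T)"
    if "(x,y) \<in> R0 \<or> ((x,a) \<in> R0 \<and> (b,y) \<in> R0) \<or> ((x,b) \<in> R0 \<and> (a,y) \<in> R0)"
    using that
  proof (elim disjE conjE)
    assume "(x,y) \<in> R0" then show ?thesis using m by blast
  next
    assume "(x,a) \<in> R0" "(b,y) \<in> R0"
    then show ?thesis using m ab reach_trans by (metis subsetD)
  next
    assume "(x,b) \<in> R0" "(a,y) \<in> R0"
    then show ?thesis using m ba reach_trans by (metis subsetD)
  qed
  ultimately show ?thesis unfolding R0_def by blast
qed



lemma reach_insert_in: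
  assumes "ends e \<in> reach ends T"
  shows "reach ends (insert e T) = reach ends T"
proof -
  obtain a b where ab: "ends e = (a,b)" by (cases "ends e")
  have abr: "(a,b) \<in> reach ends T" using assms ab by simp
  have "(x,y) \<in> reach ends (insert e T) \<Longrightarrow> (x,y) \<in> reach ends T" for x y
  proof -
    assume "(x,y) \<in> reach ends (insert e T)"
    then have "(x,y) \<in> reach ends T \<or>
    ((x,a) \<in> reach ends T \<and> (b,y) \<in> reach ends T) \<or> ((x,b) \<in> reach ends T \<and> (a,y) \<in> reach ends T)"
      using reach_insert_pt[of ends e a b x y T] ab by blast
    then show ?thesis
    proof (elim disjE conjE)
      assume "(x,y) \<in> reach ends T" then show ?thesis .
    next
      assume "(x,a) \<in> reach ends T" "(b,y) \<in> reach ends T"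
      then show ?thesis using abr reach_trans by metis
    next
      assume "(x,b) \<in> reach ends T" "(a,y) \<in> reach ends T"
      then show ?thesis using reach_sym[OF abr] reach_trans by metis
    qed
  qed
  then show ?thesis using reach_mono[of T "insert e T" ends] by auto
qed


lemma forest_mono: "forest ends T \<Longrightarrow> T' \<subseteq> T \<Longrightarrow> forest ends T'"
  unfolding forest_def
proof
  fix e assume f: "\<forall>e\<in>T. ends e \<notin> reach ends (T - {e})" and s: "T' \<subseteq> T" and e: "e \<in> T'"
  have "reach ends (T' - {e}) \<subseteq> reach ends (T - {e})" using s by (intro reach_mono) auto
  then show "ends e \<notin> reach ends (T' - {e})" using f e s by auto
qed


lemma reach_class_subset:
  "(x,y) \<in> reach ends T \<Longrightarrow> y = x \<or> y \<in> edge_verts ends T"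
  unfolding reach_def
proof (induction rule: rtrancl_induct)
  case base then show ?case by simp
next
  case (step y z)
  then obtain e where e: "e \<in> T" "ends e = (y,z) \<or> ends e = (z,y)" unfolding adj_def by auto
  then have "z \<in> edge_verts ends T" unfolding edge_verts_def
    by (metis UnI1 UnI2 fst_conv image_eqI snd_conv)
  then show ?case by simp
qed

lemma reach_class_eq: "reach ends T `` {x} = reach ends T `` {y} \<longleftrightarrow> (x,y) \<in> reach ends T"
proof
  assume "reach ends T `` {x} = reach ends T `` {y}"
  then have "y \<in> reach ends T `` {x}" by auto
  then show "(x,y) \<in> reach ends T" by simp
next
  assume xy: "(x,y) \<in> reach ends T"
  have "(x,z) \<in> reach ends T \<longleftrightarrow> (y,z) \<in> reach ends T" for z
    using xy reach_trans reach_sym by metis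
  then show "reach ends T `` {x} = reach ends T `` {y}" by auto
qed

lemma fc_empty: "forest_components ends V {} = (\<lambda>a. {a}) ` V"
  unfolding forest_components_def reach_empty by auto

lemma card_fc_empty: "card (forest_components ends V {}) = card V"
  unfolding fc_empty by (rule card_image) (auto simp: inj_on_def)

lemma fc_insert_in: "ends e \<in> reach ends T \<Longrightarrow>
  forest_components ends V (insert e T) = forest_components ends V T"
  unfolding forest_components_def using reach_insert_in by metis

lemma fc_insert_notin:
  assumes ab: "ends e = (a,b)" and V: "finite V" "a \<in> V" "b \<in> V" and nr: "(a,b) \<notin> reach ends T"
  shows "card (forest_components ends V (insert e T)) + 1 = card (forest_components ends V T)"
proof -
  define R0 where "R0 = reach ends T"
  define C where "C x = R0 `` {x}" for x
  have tr: "\<And>u v w. (u,v)\<in>R0 \<Longrightarrow> (v,w)\<in>R0 \<Longrightarrow> (u,w)\<in>R0"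
    unfolding R0_def by (rule reach_trans)
  have sy: "\<And>u v. (u,v)\<in>R0 \<Longrightarrow> (v,u)\<in>R0"
    unfolding R0_def by (rule reach_sym)
  have Ceq: "C x = C y \<longleftrightarrow> (x,y) \<in> R0" for x y
    unfolding C_def R0_def by (rule reach_class_eq)
  have Cmem: "y \<in> C x \<longleftrightarrow> (x,y) \<in> R0" for x y unfolding C_def by simp
  have new: "reach ends (insert e T) `` {x} = (if x \<in> C a \<union> C b then C a \<union> C b else C x)" for x
  proof -
    have pt: "y \<in> reach ends (insert e T) `` {x} \<longleftrightarrow> (x,y) \<in> R0 \<or>
      ((x,a) \<in> R0 \<and> (b,y) \<in> R0) \<or> ((x,b) \<in> R0 \<and> (a,y) \<in> R0)" for y
      using reach_insert_pt[of ends e a b x y T] ab unfolding R0_def by simp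
    have pt2: "y \<in> reach ends (insert e T) `` {x} \<longleftrightarrow> C x = C y \<or>
      (C x = C a \<and> C b = C y) \<or> (C x = C b \<and> C a = C y)" for y
      unfolding pt Ceq by simp
    have inab: "x \<in> C a \<union> C b \<longleftrightarrow> C a = C x \<or> C b = C x" by (simp add: Cmem Ceq)
    show ?thesis
    proof (cases "x \<in> C a \<union> C b")
      case True
      then have "C a = C x \<or> C b = C x" using inab by simp
      then have "y \<in> reach ends (insert e T) `` {x} \<longleftrightarrow> C a = C y \<or> C b = C y" for y
        unfolding pt2 by auto
      then have "y \<in> reach ends (insert e T) `` {x} \<longleftrightarrow> y \<in> C a \<union> C b" for y
        by (simp add: Cmem Ceq)
      then show ?thesis using True by auto
    next
      case False
      then have "C a \<noteq> C x" "C b \<noteq> C x" using inab by auto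
      then have "y \<in> reach ends (insert e T) `` {x} \<longleftrightarrow> C x = C y" for y
        unfolding pt2 by auto
      then have "y \<in> reach ends (insert e T) `` {x} \<longleftrightarrow> y \<in> C x" for y
        by (simp add: Cmem Ceq)
      then show ?thesis using False by auto
    qed
  qed
  define Rest where "Rest = C ` {x\<in>V. x \<notin> C a \<union> C b}"
  have fc_old: "forest_components ends V T = insert (C a) (insert (C b) Rest)"
  proof -
    have "forest_components ends V T = C ` V" unfolding forest_components_def C_def R0_def by simp
    also have "\<dots> = insert (C a) (insert (C b) Rest)"
    proof
      show "C ` V \<subseteq> insert (C a) (insert (C b) Rest)"
      proof
        fix X assume "X \<in> C ` V"
        then obtain x where x: "x \<in> V" "X = C x" by auto
        show "X \<in> insert (C a) (insert (C b) Rest)"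
        proof (cases "x \<in> C a \<union> C b")
          case True
          then have "C a = C x \<or> C b = C x" by (simp add: Cmem Ceq)
          then have "C x = C a \<or> C x = C b" by auto
          then show ?thesis using x by auto
        next
          case False then show ?thesis unfolding Rest_def using x by auto
        qed
      qed
      show "insert (C a) (insert (C b) Rest) \<subseteq> C ` V"
        unfolding Rest_def using V by auto
    qed
    finally show ?thesis .
  qed
  have fc_new: "forest_components ends V (insert e T) = insert (C a \<union> C b) Rest"
  proof -
    have "forest_components ends V (insert e T) = (\<lambda>x. if x \<in> C a \<union> C b then C a \<union> C b else C x) ` V"
      unfolding forest_components_def using new by simp
    also have "\<dots> = insert (C a \<union> C b) Rest"
    proof
      show "(\<lambda>x. if x \<in> C a \<union> C b then C a \<union> C b else C x) ` V \<subseteq> insert (C a \<union> C b) Rest"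
        unfolding Rest_def by auto
      have aCa: "a \<in> C a" using Cmem R0_def by simp
      show "insert (C a \<union> C b) Rest \<subseteq> (\<lambda>x. if x \<in> C a \<union> C b then C a \<union> C b else C x) ` V"
      proof
        fix X assume X: "X \<in> insert (C a \<union> C b) Rest"
        show "X \<in> (\<lambda>x. if x \<in> C a \<union> C b then C a \<union> C b else C x) ` V"
        proof (cases "X = C a \<union> C b")
          case True
          then show ?thesis using aCa V(2) by (intro image_eqI[where x=a]) auto
        next
          case False
          then obtain x where x: "x \<in> V" "x \<notin> C a \<union> C b" "X = C x" using X unfolding Rest_def by auto
          then show ?thesis by (intro image_eqI[where x=x]) auto
        qed
      qed
    qed
    finally show ?thesis .
  qed
  have finR: "finite Rest" unfolding Rest_def using V by simp
  have aa: "(a,a) \<in> R0" "(b,b) \<in> R0" unfolding R0_def by simp_all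
  have nab: "(a,b) \<notin> R0" using nr R0_def by simp
  have n1: "C a \<notin> Rest"
  proof
    assume "C a \<in> Rest"
    then obtain x where "x \<notin> C a" "C a = C x" unfolding Rest_def by auto
    then show False using Ceq Cmem by auto
  qed
  have n2: "C b \<notin> Rest"
  proof
    assume "C b \<in> Rest"
    then obtain x where "x \<notin> C b" "C b = C x" unfolding Rest_def by auto
    then show False using Ceq Cmem by auto
  qed
  have n3: "C a \<union> C b \<notin> Rest"
  proof
    assume "C a \<union> C b \<in> Rest"
    then obtain x where "x \<notin> C a \<union> C b" "C a \<union> C b = C x" unfolding Rest_def by auto
    moreover have "a \<in> C a" using Cmem aa by simp
    ultimately have "(x,a) \<in> R0" using Cmem by auto
    then have "x \<in> C a" using Cmem sy by auto
    then show False using \<open>x \<notin> C a \<union> C b\<close> by auto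
  qed
  have n4: "C a \<noteq> C b" using Ceq nab by auto
  show ?thesis unfolding fc_old fc_new using finR n1 n2 n3 n4 by simp
qed

lemma fc_count:
  assumes "finite V" "finite T" "\<forall>e\<in>T. ends e \<in> V \<times> V"
  shows "card (forest_components ends V T) + card T \<ge> card V \<and>
    (forest ends T \<longleftrightarrow> card (forest_components ends V T) + card T = card V)"
  using assms(2,3)
proof (induction T rule: finite_induct)
  case empty
  then show ?case using card_fc_empty[of ends V] unfolding forest_def by simp
next
  case (insert e T)
  obtain a b where ab: "ends e = (a,b)" by (cases "ends e")
  have IH: "card (forest_components ends V T) + card T \<ge> card V"
    "forest ends T \<longleftrightarrow> card (forest_components ends V T) + card T = card V"
    using insert by auto
  have ct: "card (insert e T) = card T + 1" using insert by simp
  show ?case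
  proof (cases "(a,b) \<in> reach ends T")
    case True
    then have "forest_components ends V (insert e T) = forest_components ends V T"
      using fc_insert_in ab by metis
    moreover have "\<not> forest ends (insert e T)"
      unfolding forest_def using True ab insert(2) by auto
    ultimately show ?thesis using IH ct by auto
  next
    case False
    have abV: "a \<in> V" "b \<in> V" using insert(4) ab by auto
    have c: "card (forest_components ends V (insert e T)) + 1 = card (forest_components ends V T)"
      using fc_insert_notin[OF ab assms(1) abV False] .
    have "forest ends (insert e T) \<longleftrightarrow> forest ends T"
    proof
      assume "forest ends (insert e T)" then show "forest ends T" using forest_mono by blast
    next
      assume fT: "forest ends T"
      show "forest ends (insert e T)" unfolding forest_def
      proof
        fix f assume f: "f \<in> insert e T"
        show "ends f \<notin> reach ends (insert e T - {f})"
        proof (cases "f = e")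
          case True
          then have "insert e T - {f} = T" using insert(2) by auto
          then show ?thesis using True False ab by simp
        next
          case fne: False
          then have fT': "f \<in> T" using f by simp
          obtain x y where xy: "ends f = (x,y)" by (cases "ends f")
          have nf: "(x,y) \<notin> reach ends (T - {f})" using fT fT' xy unfolding forest_def by auto
          have eq: "insert e T - {f} = insert e (T - {f})" using fne by auto
          show ?thesis
          proof
            assume "ends f \<in> reach ends (insert e T - {f})"
            then have "(x,y) \<in> reach ends (insert e (T - {f}))" using xy eq by simp
            then have "((x,a) \<in> reach ends (T - {f}) \<and> (b,y) \<in> reach ends (T - {f})) \<or>
                ((x,b) \<in> reach ends (T - {f}) \<and> (a,y) \<in> reach ends (T - {f}))"
              using reach_insert_pt[of ends e a b x y "T - {f}"] ab nf by simp
            moreover have "reach ends (T - {f}) \<subseteq> reach ends T" by (rule reach_mono) auto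
            moreover have "(x,y) \<in> reach ends T" using reach_edge[of f T ends] fT' xy by simp
            ultimately consider "(x,a) \<in> reach ends T" "(b,y) \<in> reach ends T"
              | "(x,b) \<in> reach ends T" "(a,y) \<in> reach ends T" by blast
            then have "(a,b) \<in> reach ends T"
            proof cases
              case 1
              have "(a,x) \<in> reach ends T" using 1(1) by (rule reach_sym)
              moreover have "(y,b) \<in> reach ends T" using 1(2) by (rule reach_sym)
              ultimately show ?thesis using \<open>(x,y) \<in> reach ends T\<close> reach_trans by metis
            next
              case 2
              have "(b,x) \<in> reach ends T" using 2(1) by (rule reach_sym)
              then have "(b,y) \<in> reach ends T" using \<open>(x,y) \<in> reach ends T\<close> by (rule reach_trans)
              then have "(b,a) \<in> reach ends T" using reach_sym[OF 2(2)] by (rule reach_trans)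
              then show ?thesis by (rule reach_sym)
            qed
            then show False using False by simp
          qed
        qed
      qed
    qed
    then show ?thesis using IH ct c by auto
  qed
qed

lemma connected_iff_card:
  assumes "V \<noteq> {}"
  shows "(\<forall>a\<in>V. \<forall>b\<in>V. (a,b) \<in> reach ends T) \<longleftrightarrow> card (forest_components ends V T) = 1"
proof
  assume c: "\<forall>a\<in>V. \<forall>b\<in>V. (a,b) \<in> reach ends T"
  obtain a0 where a0: "a0 \<in> V" using assms by auto
  have "\<forall>a\<in>V. reach ends T `` {a} = reach ends T `` {a0}"
    using c a0 by (simp add: reach_class_eq)
  then have "forest_components ends V T = (\<lambda>a. reach ends T `` {a0}) ` V"
    unfolding forest_components_def by (intro image_cong) auto
  also have "\<dots> = {reach ends T `` {a0}}" using a0 by (rule image_constant)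
  finally have "forest_components ends V T = {reach ends T `` {a0}}" .
  then show "card (forest_components ends V T) = 1" by simp
next
  assume "card (forest_components ends V T) = 1"
  then obtain X where X: "forest_components ends V T = {X}" using card_1_singletonE by blast
  show "\<forall>a\<in>V. \<forall>b\<in>V. (a,b) \<in> reach ends T"
  proof (intro ballI)
    fix a b assume "a \<in> V" "b \<in> V"
    then have "reach ends T `` {a} \<in> forest_components ends V T" "reach ends T `` {b} \<in> forest_components ends V T"
      unfolding forest_components_def by auto
    then have "reach ends T `` {a} = reach ends T `` {b}" using X by simp
    then show "(a,b) \<in> reach ends T" by (simp add: reach_class_eq)
  qed
qed

lemma spanning_tree_iff:
  assumes "finite V" "V \<noteq> {}" "finite E" "\<forall>e\<in>E. ends e \<in> V \<times> V"
  shows "spanning_tree V E ends T \<longleftrightarrow>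
    T \<subseteq> E \<and> (\<forall>a\<in>V. \<forall>b\<in>V. (a,b) \<in> reach ends T) \<and> card T + 1 = card V"
proof (cases "T \<subseteq> E")
  case True
  then have fT: "finite T" using assms(3) finite_subset by blast
  have eT: "\<forall>e\<in>T. ends e \<in> V \<times> V" using True assms(4) by blast
  note fc = fc_count[OF assms(1) fT eT]
  show ?thesis unfolding spanning_tree_def using True fc connected_iff_card[OF assms(2), of ends T]
    by auto
next
  case False then show ?thesis unfolding spanning_tree_def by auto
qed

lemma spanning_tree_card:
  assumes "finite V" "V \<noteq> {}" "finite E" "\<forall>e\<in>E. ends e \<in> V \<times> V" "spanning_tree V E ends T"
  shows "card T + 1 = card V"
  using spanning_tree_iff[OF assms(1-4)] assms(5) by blast

lemma fc_two:
  assumes "a \<in> W" "b \<in> W" "\<forall>x\<in>W. (x,a) \<in> reach ends T \<or> (x,b) \<in> reach ends T"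
  shows "forest_components ends W T = {reach ends T `` {a}, reach ends T `` {b}}"
proof -
  have "\<forall>x\<in>W. reach ends T `` {x} = reach ends T `` {a} \<or> reach ends T `` {x} = reach ends T `` {b}"
    using assms(3) reach_class_eq by metis
  then show ?thesis unfolding forest_components_def using assms(1,2) by auto
qed

lemma card_fc_two:
  assumes "a \<in> W" "b \<in> W" "\<forall>x\<in>W. (x,a) \<in> reach ends T \<or> (x,b) \<in> reach ends T"
  shows "card (forest_components ends W T) = (if (a,b) \<in> reach ends T then 1 else 2)"
  unfolding fc_two[OF assms] using reach_class_eq[of ends T a b] by auto

locale glue =
  fixes V :: "'v set" and E :: "'e set" and ends :: "'e \<Rightarrow> 'v \<times> 'v"
    and R :: "'v set" and J :: "'j set" and P :: "'j \<Rightarrow> 'e set" and I :: "'j \<Rightarrow> 'v set"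
    and a :: "'j \<Rightarrow> 'v" and b :: "'j \<Rightarrow> 'v"
  assumes finV: "finite V" and finE: "finite E" and finJ: "finite J"
    and Rne: "R \<noteq> {}"
    and V_eq: "V = R \<union> (\<Union>j\<in>J. I j)"
    and RI: "\<forall>j\<in>J. R \<inter> I j = {}"
    and Idisj: "\<forall>j\<in>J. \<forall>k\<in>J. j \<noteq> k \<longrightarrow> I j \<inter> I k = {}"
    and E_eq: "E = (\<Union>j\<in>J. P j)"
    and Pdisj: "\<forall>j\<in>J. \<forall>k\<in>J. j \<noteq> k \<longrightarrow> P j \<inter> P k = {}"
    and abR: "\<forall>j\<in>J. a j \<in> R \<and> b j \<in> R"
    and Pends: "\<forall>j\<in>J. \<forall>e\<in>P j. ends e \<in> insert (a j) (insert (b j) (I j)) \<times> insert (a j) (insert (b j) (I j))"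
begin

definition VJ where "VJ j = insert (a j) (insert (b j) (I j))"
definition J2 where "J2 = {j\<in>J. a j \<noteq> b j}"
definition eH where "eH j = (a j, b j)"
definition ok where "ok j f \<longleftrightarrow> f \<subseteq> P j \<and> forest ends f \<and>
   (\<forall>x\<in>VJ j. (x, a j) \<in> reach ends f \<or> (x, b j) \<in> reach ends f)"
definition conn where "conn j f \<longleftrightarrow> a j \<noteq> b j \<and> (a j, b j) \<in> reach ends f"
definition tau where "tau T = {j\<in>J. conn j (T \<inter> P j)}"

lemma R_sub: "R \<subseteq> V" using V_eq by auto
lemma I_sub: "j \<in> J \<Longrightarrow> I j \<subseteq> V" using V_eq by auto
lemma finR: "finite R" using R_sub finV finite_subset by blast
lemma finI: "j \<in> J \<Longrightarrow> finite (I j)" using I_sub finV finite_subset by blast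
lemma P_sub: "j \<in> J \<Longrightarrow> P j \<subseteq> E" using E_eq by auto
lemma finP: "j \<in> J \<Longrightarrow> finite (P j)" using P_sub finE finite_subset by blast
lemma VJ_sub: "j \<in> J \<Longrightarrow> VJ j \<subseteq> V" using I_sub abR R_sub unfolding VJ_def by auto
lemma finVJ: "j \<in> J \<Longrightarrow> finite (VJ j)" using finI unfolding VJ_def by simp
lemma Pends': "j \<in> J \<Longrightarrow> e \<in> P j \<Longrightarrow> ends e \<in> VJ j \<times> VJ j"
  unfolding VJ_def by (rule bspec[OF bspec[OF Pends]])

lemma endsV: "\<forall>e\<in>E. ends e \<in> V \<times> V"
proof
  fix e assume "e \<in> E"
  then obtain j where j: "j \<in> J" "e \<in> P j" using E_eq by auto
  have "ends e \<in> VJ j \<times> VJ j" using Pends'[OF j] .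
  then show "ends e \<in> V \<times> V" using VJ_sub[OF j(1)] by (cases "ends e") auto
qed
lemma ab_notI: "j \<in> J \<Longrightarrow> a j \<notin> I j \<and> b j \<notin> I j" using abR RI by blast
lemma card_VJ: "j \<in> J \<Longrightarrow> card (VJ j) = card (I j) + (if a j = b j then 1 else 2)"
  using ab_notI finI unfolding VJ_def by auto
lemma card_V: "card V = card R + (\<Sum>j\<in>J. card (I j))"
proof -
  have "card (\<Union>j\<in>J. I j) = (\<Sum>j\<in>J. card (I j))"
    using card_UN_disjoint[OF finJ] finI Idisj by blast
  moreover have "R \<inter> (\<Union>j\<in>J. I j) = {}" using RI by blast
  moreover have "finite (\<Union>j\<in>J. I j)" using finJ finI by blast
  ultimately show ?thesis unfolding V_eq using card_Un_disjoint finR by metis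
qed
lemma T_decomp: "T \<subseteq> E \<Longrightarrow> T = (\<Union>j\<in>J. T \<inter> P j)" using E_eq by blast
lemma card_T: "T \<subseteq> E \<Longrightarrow> card T = (\<Sum>j\<in>J. card (T \<inter> P j))"
proof -
  assume T: "T \<subseteq> E"
  have "card (\<Union>j\<in>J. T \<inter> P j) = (\<Sum>j\<in>J. card (T \<inter> P j))"
    by (rule card_UN_disjoint[OF finJ]) (use finP Pdisj in blast)+
  then show ?thesis using T_decomp[OF T] by simp
qed
lemma eH_R: "\<forall>j\<in>J2. eH j \<in> R \<times> R" using abR unfolding J2_def eH_def by auto
lemma finJ2: "finite J2" using finJ unfolding J2_def by simp
lemma tau_J2: "tau T \<subseteq> J2" unfolding tau_def J2_def conn_def by auto

lemma VJ_cases: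
  assumes "j \<in> J" "x \<in> VJ j"
  shows "x \<in> R \<and> (x = a j \<or> x = b j) \<or> x \<in> I j \<and> x \<notin> R"
  using assms abR RI unfolding VJ_def by blast

lemma conn_lemma:
  assumes k: "k \<in> J" and cd: "c \<in> {a k, b k}" "d \<in> {a k, b k}" "c \<noteq> d"
    and r: "(c,d) \<in> reach ends (T \<inter> P k)"
  shows "(c,d) \<in> reach eH (tau T)"
proof -
  have ne: "a k \<noteq> b k" using cd by auto
  have "(a k, b k) \<in> reach ends (T \<inter> P k)"
    using cd r reach_sym by (cases "c = a k") auto
  then have kt: "k \<in> tau T" unfolding tau_def conn_def using k ne by simp
  have "(a k, b k) \<in> reach eH (tau T)" using reach_edge[OF kt, of eH] unfolding eH_def by simp
  then show ?thesis using cd reach_sym by (cases "c = a k") auto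
qed

lemma R1:
  assumes T: "T \<subseteq> E" and r: "r \<in> R" and rz: "(r,z) \<in> reach ends T"
  shows "(z \<in> R \<longrightarrow> (r,z) \<in> reach eH (tau T)) \<and>
    (\<forall>j\<in>J. z \<in> I j \<longrightarrow> (\<exists>c\<in>{a j, b j}. (r,c) \<in> reach eH (tau T) \<and> (c,z) \<in> reach ends (T \<inter> P j)))"
  using rz unfolding reach_def[of ends T]
proof (induction rule: rtrancl_induct)
  case base
  show ?case
  proof (intro conjI impI ballI)
    show "(r,r) \<in> reach eH (tau T)" by simp
  next
    fix j assume "j \<in> J" "r \<in> I j"
    then have False using r RI by blast
    then show "\<exists>c\<in>{a j, b j}. (r,c) \<in> reach eH (tau T) \<and> (c,r) \<in> reach ends (T \<inter> P j)" by simp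
  qed
next
  case (step y z)
  from step(2) obtain e where e: "e \<in> T" "ends e = (y,z) \<or> ends e = (z,y)" unfolding adj_def by auto
  then obtain k where k: "k \<in> J" "e \<in> P k" using T E_eq by blast
  have "ends e \<in> VJ k \<times> VJ k" using Pends'[OF k] .
  then have yz: "y \<in> VJ k" "z \<in> VJ k" using e(2) by auto
  have eTP: "e \<in> T \<inter> P k" using e k by simp
  have ekr: "(y,z) \<in> reach ends (T \<inter> P k)"
    using e(2)
  proof
    assume "ends e = (y,z)" then show ?thesis using reach_edge[OF eTP, of ends] by simp
  next
    assume "ends e = (z,y)" then show ?thesis using reach_edge[OF eTP, of ends] reach_sym by force
  qed
  have IH1: "y \<in> R \<Longrightarrow> (r,y) \<in> reach eH (tau T)" using step(3) by blast
  have IH2: "\<And>j. j \<in> J \<Longrightarrow> y \<in> I j \<Longrightarrow> (\<exists>c\<in>{a j, b j}. (r,c) \<in> reach eH (tau T) \<and> (c,y) \<in> reach ends (T \<inter> P j))"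
    using step(3) by blast
  obtain c where c: "c \<in> {a k, b k}" "(r,c) \<in> reach eH (tau T)" "(c,z) \<in> reach ends (T \<inter> P k)"
  proof (cases "y \<in> R")
    case True
    then have "y = a k \<or> y = b k" using VJ_cases[OF k(1) yz(1)] by auto
    then show ?thesis using that[of y] IH1[OF True] ekr by auto
  next
    case False
    then have "y \<in> I k" using VJ_cases[OF k(1) yz(1)] by auto
    then obtain c where "c\<in>{a k, b k}" "(r,c) \<in> reach eH (tau T)" "(c,y) \<in> reach ends (T \<inter> P k)"
      using IH2[OF k(1)] by blast
    moreover have "(c,z) \<in> reach ends (T \<inter> P k)" using reach_trans[OF \<open>(c,y) \<in> reach ends (T \<inter> P k)\<close> ekr] .
    ultimately show ?thesis using that[of c] by blast
  qed
  show ?case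
  proof (intro conjI impI ballI)
    assume zR: "z \<in> R"
    then have zab: "z \<in> {a k, b k}" using VJ_cases[OF k(1) yz(2)] by auto
    show "(r,z) \<in> reach eH (tau T)"
    proof (cases "c = z")
      case True then show ?thesis using c by simp
    next
      case False
      then have "(c,z) \<in> reach eH (tau T)" using conn_lemma[OF k(1) c(1) zab False c(3)] by simp
      then show ?thesis using reach_trans[OF c(2)] by blast
    qed
  next
    fix j assume j: "j \<in> J" and zj: "z \<in> I j"
    have "z \<notin> R" using zj j RI by blast
    then have "z \<in> I k" using VJ_cases[OF k(1) yz(2)] by auto
    then have "j = k" using Idisj j k(1) zj by blast
    then show "\<exists>c\<in>{a j, b j}. (r,c) \<in> reach eH (tau T) \<and> (c,z) \<in> reach ends (T \<inter> P j)"
      using c by blast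
  qed
qed

lemma lift:
  assumes "(x,y) \<in> reach eH (tau T)"
  shows "(x,y) \<in> reach ends T"
  using assms unfolding reach_def[of eH]
proof (induction rule: rtrancl_induct)
  case base then show ?case by simp
next
  case (step y z)
  from step(2) obtain k where k: "k \<in> tau T" "eH k = (y,z) \<or> eH k = (z,y)" unfolding adj_def by auto
  then have "(a k, b k) \<in> reach ends (T \<inter> P k)" unfolding tau_def conn_def by auto
  moreover have "reach ends (T \<inter> P k) \<subseteq> reach ends T" by (rule reach_mono) auto
  ultimately have "(a k, b k) \<in> reach ends T" by blast
  have "(y,z) \<in> reach ends T" using k(2)
  proof
    assume "eH k = (y,z)" then show ?thesis using \<open>(a k, b k) \<in> reach ends T\<close> unfolding eH_def by simp
  next
    assume "eH k = (z,y)" then show ?thesis using \<open>(a k, b k) \<in> reach ends T\<close> reach_sym unfolding eH_def by force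
  qed
  then show ?case using reach_trans[OF step(3)] by blast
qed

end

lemma sum_indicator_card: "finite A \<Longrightarrow> (\<Sum>j\<in>A. (if Q j then 1 else 0::nat)) = card {j\<in>A. Q j}"
  by (simp add: sum.inter_filter[symmetric])

context glue begin

definition ind where "ind j f = (if conn j f then 1 else (0::nat))"

lemma Vne: "V \<noteq> {}" using R_sub Rne by blast

lemma piece_count:
  assumes j: "j \<in> J" and f: "f \<subseteq> P j"
    and rok: "\<forall>x\<in>VJ j. (x, a j) \<in> reach ends f \<or> (x, b j) \<in> reach ends f"
  shows "card f \<ge> card (I j) + ind j f \<and> (forest ends f \<longleftrightarrow> card f = card (I j) + ind j f)"
proof -
  have finf: "finite f" using finP[OF j] f finite_subset by blast
  have ef: "\<forall>e\<in>f. ends e \<in> VJ j \<times> VJ j" using Pends'[OF j] f by blast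
  note fc = fc_count[OF finVJ[OF j] finf ef]
  have abV: "a j \<in> VJ j" "b j \<in> VJ j" unfolding VJ_def by auto
  have cfc: "card (forest_components ends (VJ j) f) = (if (a j, b j) \<in> reach ends f then 1 else 2)"
    using card_fc_two[OF abV rok] .
  have cV: "card (VJ j) = card (I j) + (if a j = b j then 1 else 2)" using card_VJ[OF j] .
  show ?thesis
  proof (cases "a j = b j")
    case True
    then have "(a j, b j) \<in> reach ends f" by simp
    then show ?thesis using fc cfc cV True unfolding ind_def conn_def by auto
  next
    case False
    then show ?thesis using fc cfc cV unfolding ind_def conn_def by auto
  qed
qed

lemma sum_ind: "(\<Sum>j\<in>J. ind j (T \<inter> P j)) = card (tau T)"
  unfolding ind_def tau_def using sum_indicator_card[OF finJ] by simp

lemma glue_fwd: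
  assumes ST: "spanning_tree V E ends T"
  shows "T \<subseteq> E" "\<forall>j\<in>J. ok j (T \<inter> P j)" "spanning_tree R J2 eH (tau T)"
proof -
  have st: "T \<subseteq> E" "\<forall>x\<in>V. \<forall>y\<in>V. (x,y) \<in> reach ends T" "card T + 1 = card V"
    using spanning_tree_iff[OF finV Vne finE endsV] ST by auto
  show "T \<subseteq> E" using st(1) .
  obtain r0 where r0: "r0 \<in> R" using Rne by auto
  have rok: "\<forall>x\<in>VJ j. (x, a j) \<in> reach ends (T \<inter> P j) \<or> (x, b j) \<in> reach ends (T \<inter> P j)"
    if j: "j \<in> J" for j
  proof
    fix x assume x: "x \<in> VJ j"
    show "(x, a j) \<in> reach ends (T \<inter> P j) \<or> (x, b j) \<in> reach ends (T \<inter> P j)"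
    proof (cases "x \<in> I j \<and> x \<notin> R")
      case True
      have "x \<in> V" using VJ_sub[OF j] x by blast
      then have "(r0, x) \<in> reach ends T" using st(2) r0 R_sub by blast
      then obtain c where c: "c \<in> {a j, b j}" "(c,x) \<in> reach ends (T \<inter> P j)"
        using R1[OF st(1) r0] j True by blast
      then have "(x,c) \<in> reach ends (T \<inter> P j)" using reach_sym by metis
      then show ?thesis using c(1) by blast
    next
      case False
      then have "x = a j \<or> x = b j" using VJ_cases[OF j x] by blast
      then show ?thesis by auto
    qed
  qed
  have connH: "\<forall>x\<in>R. \<forall>y\<in>R. (x,y) \<in> reach eH (tau T)"
  proof (intro ballI)
    fix x y assume xy: "x \<in> R" "y \<in> R"
    then have "(x,y) \<in> reach ends T" using st(2) R_sub by blast
    then show "(x,y) \<in> reach eH (tau T)" using R1[OF st(1) xy(1)] xy(2) by blast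
  qed
  have lower: "\<forall>j\<in>J. card (T \<inter> P j) \<ge> card (I j) + ind j (T \<inter> P j)"
    using piece_count rok by blast
  have fintau: "finite (tau T)" using tau_J2 finJ2 finite_subset by blast
  have etau: "\<forall>j\<in>tau T. eH j \<in> R \<times> R" using tau_J2 eH_R by blast
  have Hlow: "card (tau T) + 1 \<ge> card R"
    using fc_count[OF finR fintau etau] connected_iff_card[OF Rne, of eH "tau T"] connH by auto
  have s1: "(\<Sum>j\<in>J. card (I j) + ind j (T \<inter> P j)) = (\<Sum>j\<in>J. card (I j)) + card (tau T)"
    using sum_ind by (simp add: sum.distrib)
  have s2: "(\<Sum>j\<in>J. card (I j) + ind j (T \<inter> P j)) \<le> (\<Sum>j\<in>J. card (T \<inter> P j))"
    using lower by (intro sum_mono) auto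
  have cT: "card T = (\<Sum>j\<in>J. card (T \<inter> P j))" using card_T[OF st(1)] .
  have eqs: "card (tau T) + 1 = card R"
    "(\<Sum>j\<in>J. card (I j) + ind j (T \<inter> P j)) = (\<Sum>j\<in>J. card (T \<inter> P j))"
    using s1 s2 cT st(3) card_V Hlow by linarith+
  have each: "card (T \<inter> P j) = card (I j) + ind j (T \<inter> P j)" if j: "j \<in> J" for j
    using sum_mono_inv[OF eqs(2), of j] lower j finJ by (metis (no_types, lifting))
  show "\<forall>j\<in>J. ok j (T \<inter> P j)"
  proof
    fix j assume j: "j \<in> J"
    have "forest ends (T \<inter> P j)" using piece_count[OF j _ rok[OF j]] each[OF j] by blast
    then show "ok j (T \<inter> P j)" unfolding ok_def using rok[OF j] by blast
  qed
  show "spanning_tree R J2 eH (tau T)"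
    using spanning_tree_iff[OF finR Rne finJ2 eH_R] tau_J2 connH eqs(1) by auto
qed

lemma glue_bwd:
  assumes T: "T \<subseteq> E" and oks: "\<forall>j\<in>J. ok j (T \<inter> P j)" and H: "spanning_tree R J2 eH (tau T)"
  shows "spanning_tree V E ends T"
proof -
  have stH: "\<forall>x\<in>R. \<forall>y\<in>R. (x,y) \<in> reach eH (tau T)" "card (tau T) + 1 = card R"
    using spanning_tree_iff[OF finR Rne finJ2 eH_R] H by auto
  obtain r0 where r0: "r0 \<in> R" using Rne by auto
  have tor0: "(x, r0) \<in> reach ends T" if x: "x \<in> V" for x
  proof (cases "x \<in> R")
    case True
    then show ?thesis using stH(1) r0 lift by blast
  next
    case False
    then obtain j where j: "j \<in> J" "x \<in> I j" using x V_eq by blast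
    then have xv: "x \<in> VJ j" unfolding VJ_def by simp
    have okj: "ok j (T \<inter> P j)" using oks j(1) by blast
    then obtain c where c: "c \<in> {a j, b j}" "(x,c) \<in> reach ends (T \<inter> P j)"
      unfolding ok_def using xv by blast
    have "reach ends (T \<inter> P j) \<subseteq> reach ends T" by (rule reach_mono) auto
    then have xc: "(x,c) \<in> reach ends T" using c(2) by blast
    have "c \<in> R" using c(1) abR j(1) by blast
    then have "(c, r0) \<in> reach ends T" using stH(1) r0 lift by blast
    then show ?thesis using reach_trans[OF xc] by blast
  qed
  have conn: "\<forall>x\<in>V. \<forall>y\<in>V. (x,y) \<in> reach ends T"
  proof (intro ballI)
    fix x y assume "x \<in> V" "y \<in> V"
    then have "(x,r0) \<in> reach ends T" "(y,r0) \<in> reach ends T" using tor0 by auto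
    then show "(x,y) \<in> reach ends T" using reach_sym reach_trans by metis
  qed
  have each: "card (T \<inter> P j) = card (I j) + ind j (T \<inter> P j)" if j: "j \<in> J" for j
  proof -
    have okj: "ok j (T \<inter> P j)" using oks j by blast
    then have "T \<inter> P j \<subseteq> P j" "forest ends (T \<inter> P j)"
      "\<forall>x\<in>VJ j. (x, a j) \<in> reach ends (T \<inter> P j) \<or> (x, b j) \<in> reach ends (T \<inter> P j)"
      unfolding ok_def by auto
    then show ?thesis using piece_count[OF j] by blast
  qed
  have "card T = (\<Sum>j\<in>J. card (I j) + ind j (T \<inter> P j))"
    using card_T[OF T] each by simp
  also have "\<dots> = (\<Sum>j\<in>J. card (I j)) + card (tau T)"
    using sum_ind by (simp add: sum.distrib)
  finally have "card T + 1 = card V" using card_V stH(2) by linarith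
  then show ?thesis using spanning_tree_iff[OF finV Vne finE endsV] T conn by auto
qed

lemma glue_iff:
  "spanning_tree V E ends T \<longleftrightarrow> T \<subseteq> E \<and> (\<forall>j\<in>J. ok j (T \<inter> P j)) \<and> spanning_tree R J2 eH (tau T)"
  using glue_fwd glue_bwd by blast

end

context glue begin

definition Cn where "Cn j = {f. ok j f \<and> conn j f}"
definition Sp where "Sp j = {f. ok j f \<and> \<not> conn j f}"

lemma glue_count:
  "card {T. spanning_tree V E ends T} =
    (\<Sum>\<tau>\<in>{\<tau>. spanning_tree R J2 eH \<tau>}. \<Prod>j\<in>J. (if j \<in> \<tau> then card (Cn j) else card (Sp j)))"
proof -
  define Sel where "Sel \<tau> j = (if j \<in> \<tau> then Cn j else Sp j)" for \<tau> j
  define U where "U \<tau> = PiE J (Sel \<tau>)" for \<tau>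
  define STH where "STH = {\<tau>. spanning_tree R J2 eH \<tau>}"
  define \<Phi> where "\<Phi> T = restrict (\<lambda>j. T \<inter> P j) J" for T
  have STH_sub: "\<tau> \<subseteq> J2" if "\<tau> \<in> STH" for \<tau> using that unfolding STH_def spanning_tree_def by blast
  have finSTH: "finite STH"
  proof -
    have "STH \<subseteq> Pow J2" using STH_sub by blast
    then show ?thesis using finJ2 finite_subset by blast
  qed
  have J2J: "J2 \<subseteq> J" unfolding J2_def by auto
  have finSel: "finite (Sel \<tau> j)" if "j \<in> J" for \<tau> j
  proof -
    have "Sel \<tau> j \<subseteq> Pow (P j)" unfolding Sel_def Cn_def Sp_def ok_def by auto
    then show ?thesis using finP[OF that] finite_subset by blast
  qed
  have mem: "f j \<in> Sel \<tau> j" if "f \<in> U \<tau>" "j \<in> J" for f \<tau> j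
    using PiE_mem[of f J "Sel \<tau>" j] that unfolding U_def by blast
  have okSel: "ok j (f j)" if "f \<in> U \<tau>" "j \<in> J" for f \<tau> j
    using mem[OF that] unfolding Sel_def Cn_def Sp_def by (cases "j \<in> \<tau>") auto
  have connSel: "conn j (f j) \<longleftrightarrow> j \<in> \<tau>" if "f \<in> U \<tau>" "j \<in> J" for f \<tau> j
    using mem[OF that] unfolding Sel_def Cn_def Sp_def by (cases "j \<in> \<tau>") auto
  have disj: "U \<tau>1 \<inter> U \<tau>2 = {}" if "\<tau>1 \<in> STH" "\<tau>2 \<in> STH" "\<tau>1 \<noteq> \<tau>2" for \<tau>1 \<tau>2
  proof (rule ccontr)
    assume "U \<tau>1 \<inter> U \<tau>2 \<noteq> {}"
    then obtain f where f: "f \<in> U \<tau>1" "f \<in> U \<tau>2" by blast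
    have "j \<in> \<tau>1 \<longleftrightarrow> j \<in> \<tau>2" for j
    proof (cases "j \<in> J")
      case True then show ?thesis using connSel[OF f(1) True] connSel[OF f(2) True] by simp
    next
      case False then show ?thesis using STH_sub that(1,2) J2J by blast
    qed
    then show False using that(3) by blast
  qed
  have cardU: "card (U \<tau>) = (\<Prod>j\<in>J. (if j \<in> \<tau> then card (Cn j) else card (Sp j)))" for \<tau>
    unfolding U_def card_PiE[OF finJ] Sel_def by (intro prod.cong) auto
  have cardUN: "card (\<Union>\<tau>\<in>STH. U \<tau>) = (\<Sum>\<tau>\<in>STH. card (U \<tau>))"
  proof (rule card_UN_disjoint[OF finSTH])
    show "\<forall>\<tau>\<in>STH. finite (U \<tau>)" unfolding U_def using finJ finSel by (auto intro: finite_PiE)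
    show "\<forall>i\<in>STH. \<forall>j\<in>STH. i \<noteq> j \<longrightarrow> U i \<inter> U j = {}" using disj by blast
  qed
  have inj: "inj_on \<Phi> {T. spanning_tree V E ends T}"
  proof (rule inj_onI)
    fix T1 T2 assume T1: "T1 \<in> {T. spanning_tree V E ends T}" and T2: "T2 \<in> {T. spanning_tree V E ends T}"
      and eq: "\<Phi> T1 = \<Phi> T2"
    have s: "T1 \<subseteq> E" "T2 \<subseteq> E" using T1 T2 glue_fwd(1) by auto
    have "T1 \<inter> P j = T2 \<inter> P j" if "j \<in> J" for j
      using fun_cong[OF eq, of j] that unfolding \<Phi>_def by simp
    then have "(\<Union>j\<in>J. T1 \<inter> P j) = (\<Union>j\<in>J. T2 \<inter> P j)" by blast
    then show "T1 = T2" using T_decomp[OF s(1)] T_decomp[OF s(2)] by simp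
  qed
  have img1: "\<Phi> ` {T. spanning_tree V E ends T} \<subseteq> (\<Union>\<tau>\<in>STH. U \<tau>)"
  proof
    fix g assume "g \<in> \<Phi> ` {T. spanning_tree V E ends T}"
    then obtain T where T: "spanning_tree V E ends T" "g = \<Phi> T" by blast
    have H: "tau T \<in> STH" using glue_fwd(3)[OF T(1)] unfolding STH_def by simp
    have oks: "\<forall>j\<in>J. ok j (T \<inter> P j)" using glue_fwd(2)[OF T(1)] .
    have "\<Phi> T \<in> U (tau T)"
      unfolding U_def \<Phi>_def
    proof (rule restrict_PiE_iff[THEN iffD2], intro ballI)
      fix j assume j: "j \<in> J"
      show "T \<inter> P j \<in> Sel (tau T) j"
        unfolding Sel_def Cn_def Sp_def tau_def using oks j by auto
    qed
    then show "g \<in> (\<Union>\<tau>\<in>STH. U \<tau>)" using H T(2) by blast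
  qed
  have img2: "(\<Union>\<tau>\<in>STH. U \<tau>) \<subseteq> \<Phi> ` {T. spanning_tree V E ends T}"
  proof
    fix f assume "f \<in> (\<Union>\<tau>\<in>STH. U \<tau>)"
    then obtain \<tau> where \<tau>: "\<tau> \<in> STH" "f \<in> U \<tau>" by blast
    define T where "T = (\<Union>j\<in>J. f j)"
    have fP: "f j \<subseteq> P j" if "j \<in> J" for j using okSel[OF \<tau>(2) that] unfolding ok_def by blast
    have TP: "T \<inter> P j = f j" if j: "j \<in> J" for j
    proof
      show "f j \<subseteq> T \<inter> P j" unfolding T_def using fP j by blast
      show "T \<inter> P j \<subseteq> f j"
      proof
        fix x assume "x \<in> T \<inter> P j"
        then obtain k where k: "k \<in> J" "x \<in> f k" "x \<in> P j" unfolding T_def by blast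
        then have "x \<in> P k" using fP by blast
        then have "k = j" using Pdisj k(1) j k(3) by blast
        then show "x \<in> f j" using k(2) by simp
      qed
    qed
    have TE: "T \<subseteq> E" unfolding T_def using fP P_sub by blast
    have fPhi: "\<Phi> T = f"
    proof
      fix j show "\<Phi> T j = f j"
      proof (cases "j \<in> J")
        case True then show ?thesis unfolding \<Phi>_def using TP by simp
      next
        case False
        have "f j = undefined" using \<tau>(2) False unfolding U_def by (rule PiE_arb)
        then show ?thesis unfolding \<Phi>_def using False by simp
      qed
    qed
    have tauT: "tau T = \<tau>"
    proof
      show "tau T \<subseteq> \<tau>" unfolding tau_def using TP connSel[OF \<tau>(2)] by auto
      show "\<tau> \<subseteq> tau T"
      proof
        fix j assume j: "j \<in> \<tau>"
        then have jJ: "j \<in> J" using STH_sub[OF \<tau>(1)] J2J by blast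
        then show "j \<in> tau T" unfolding tau_def using TP connSel[OF \<tau>(2) jJ] j by simp
      qed
    qed
    have oks: "\<forall>j\<in>J. ok j (T \<inter> P j)" using TP okSel[OF \<tau>(2)] by simp
    have H: "spanning_tree R J2 eH (tau T)" using \<tau>(1) tauT unfolding STH_def by simp
    have "spanning_tree V E ends T" using glue_bwd[OF TE oks H] .
    then show "f \<in> \<Phi> ` {T. spanning_tree V E ends T}" using fPhi by blast
  qed
  have bij: "bij_betw \<Phi> {T. spanning_tree V E ends T} (\<Union>\<tau>\<in>STH. U \<tau>)"
    using inj img1 img2 by (intro bij_betw_imageI) auto
  have "card {T. spanning_tree V E ends T} = card (\<Union>\<tau>\<in>STH. U \<tau>)"
    using bij_betw_same_card[OF bij] .
  also have "\<dots> = (\<Sum>\<tau>\<in>STH. card (U \<tau>))" using cardUN .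
  finally show ?thesis using cardU unfolding STH_def by simp
qed

end

lemma sc_reach:
  assumes eq: "\<forall>j\<in>E1. eH1 j = eH0 (\<pi> j)" and s: "\<tau> \<subseteq> E1"
  shows "reach eH1 \<tau> = reach eH0 (\<pi> ` \<tau>)"
proof -
  have h: "\<And>e. e \<in> \<tau> \<Longrightarrow> eH1 e = eH0 (\<pi> e)" using eq s by blast
  have "adj eH1 \<tau> = adj eH0 (\<pi> ` \<tau>)" unfolding adj_def using h by fastforce
  then show ?thesis unfolding reach_def by simp
qed

lemma sc_inj:
  assumes eq: "\<forall>j\<in>E1. eH1 j = eH0 (\<pi> j)" and s: "\<tau> \<subseteq> E1" and f: "forest eH1 \<tau>"
  shows "inj_on \<pi> \<tau>"
proof (rule inj_onI)
  fix x y assume x: "x \<in> \<tau>" and y: "y \<in> \<tau>" and pxy: "\<pi> x = \<pi> y"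
  show "x = y"
  proof (rule ccontr)
    assume ne: "x \<noteq> y"
    have "eH1 x = eH0 (\<pi> x)" "eH1 y = eH0 (\<pi> y)" using eq s x y by auto
    then have "eH1 x = eH1 y" using pxy by simp
    moreover have "y \<in> \<tau> - {x}" using y ne by simp
    ultimately have "eH1 x \<in> reach eH1 (\<tau> - {x})" using reach_edge[of y "\<tau> - {x}" eH1] by simp
    then show False using f x unfolding forest_def by blast
  qed
qed

lemma sc_forest:
  assumes eq: "\<forall>j\<in>E1. eH1 j = eH0 (\<pi> j)" and s: "\<tau> \<subseteq> E1" and inj: "inj_on \<pi> \<tau>"
  shows "forest eH1 \<tau> \<longleftrightarrow> forest eH0 (\<pi> ` \<tau>)"
proof -
  have key: "eH1 e \<in> reach eH1 (\<tau> - {e}) \<longleftrightarrow> eH0 (\<pi> e) \<in> reach eH0 (\<pi> ` \<tau> - {\<pi> e})" if e: "e \<in> \<tau>" for e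
  proof -
    have "reach eH1 (\<tau> - {e}) = reach eH0 (\<pi> ` (\<tau> - {e}))" using sc_reach[of E1 eH1 eH0 \<pi> "\<tau> - {e}"] eq s by blast
    also have "\<pi> ` (\<tau> - {e}) = \<pi> ` \<tau> - {\<pi> e}" using inj_on_image_set_diff[OF inj, of \<tau> "{e}"] e by auto
    finally have r: "reach eH1 (\<tau> - {e}) = reach eH0 (\<pi> ` \<tau> - {\<pi> e})" .
    have "eH1 e = eH0 (\<pi> e)" using eq s e by auto
    then show ?thesis using r by simp
  qed
  show ?thesis
  proof
    assume f: "forest eH1 \<tau>"
    show "forest eH0 (\<pi> ` \<tau>)" unfolding forest_def
    proof
      fix k assume "k \<in> \<pi> ` \<tau>"
      then obtain e where e: "e \<in> \<tau>" "k = \<pi> e" by blast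
      show "eH0 k \<notin> reach eH0 (\<pi> ` \<tau> - {k})" using key[OF e(1)] f e unfolding forest_def by auto
    qed
  next
    assume f: "forest eH0 (\<pi> ` \<tau>)"
    show "forest eH1 \<tau>" unfolding forest_def
    proof
      fix e assume e: "e \<in> \<tau>"
      show "eH1 e \<notin> reach eH1 (\<tau> - {e})" using key[OF e] f e unfolding forest_def by auto
    qed
  qed
qed

lemma sc_ST:
  assumes eq: "\<forall>j\<in>E1. eH1 j = eH0 (\<pi> j)" and im: "\<pi> ` E1 \<subseteq> E0" and s: "\<tau> \<subseteq> E1"
  shows "spanning_tree R E1 eH1 \<tau> \<longleftrightarrow> inj_on \<pi> \<tau> \<and> spanning_tree R E0 eH0 (\<pi> ` \<tau>)"
proof -
  have r: "reach eH1 \<tau> = reach eH0 (\<pi> ` \<tau>)" using sc_reach[of E1 eH1 eH0 \<pi> \<tau>] eq s by blast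
  have im2: "\<pi> ` \<tau> \<subseteq> E0" using im s by blast
  show ?thesis
  proof
    assume st: "spanning_tree R E1 eH1 \<tau>"
    then have f: "forest eH1 \<tau>" and c: "\<forall>x\<in>R. \<forall>y\<in>R. (x,y) \<in> reach eH1 \<tau>"
      unfolding spanning_tree_def by auto
    have inj: "inj_on \<pi> \<tau>" using sc_inj[of E1 eH1 eH0 \<pi> \<tau>] eq s f by blast
    have f0: "forest eH0 (\<pi> ` \<tau>)" using sc_forest[of E1 eH1 eH0 \<pi> \<tau>] eq s inj f by blast
    have c0: "\<forall>x\<in>R. \<forall>y\<in>R. (x,y) \<in> reach eH0 (\<pi> ` \<tau>)" using c r by simp
    show "inj_on \<pi> \<tau> \<and> spanning_tree R E0 eH0 (\<pi> ` \<tau>)"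
      unfolding spanning_tree_def using inj im2 f0 c0 by blast
  next
    assume h: "inj_on \<pi> \<tau> \<and> spanning_tree R E0 eH0 (\<pi> ` \<tau>)"
    then have inj: "inj_on \<pi> \<tau>" and f0: "forest eH0 (\<pi> ` \<tau>)"
      and c0: "\<forall>x\<in>R. \<forall>y\<in>R. (x,y) \<in> reach eH0 (\<pi> ` \<tau>)"
      unfolding spanning_tree_def by auto
    have f: "forest eH1 \<tau>" using sc_forest[of E1 eH1 eH0 \<pi> \<tau>] eq s inj f0 by blast
    have c: "\<forall>x\<in>R. \<forall>y\<in>R. (x,y) \<in> reach eH1 \<tau>" using c0 r by simp
    show "spanning_tree R E1 eH1 \<tau>" unfolding spanning_tree_def using s f c by blast
  qed
qed

lemma sc_fiber_count:
  fixes \<pi> :: "'e1 \<Rightarrow> 'e0"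
  assumes finE1: "finite E1" and fin: "finite \<tau>" and fib: "\<forall>j\<in>\<tau>. card {j'\<in>E1. \<pi> j' = j} = c"
  shows "card {\<tau>'. \<tau>' \<subseteq> E1 \<and> inj_on \<pi> \<tau>' \<and> \<pi> ` \<tau>' = \<tau>} = c ^ card \<tau>"
proof -
  define fb where "fb j = {j'\<in>E1. \<pi> j' = j}" for j
  define G where "G \<sigma> = \<sigma> ` \<tau>" for \<sigma> :: "'e0 \<Rightarrow> 'e1"
  have inj: "inj_on G (PiE \<tau> fb)"
  proof (rule inj_onI)
    fix \<sigma>1 \<sigma>2 assume s1: "\<sigma>1 \<in> PiE \<tau> fb" and s2: "\<sigma>2 \<in> PiE \<tau> fb" and eq: "G \<sigma>1 = G \<sigma>2"
    show "\<sigma>1 = \<sigma>2"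
    proof (rule PiE_ext[OF s1 s2])
      fix j assume j: "j \<in> \<tau>"
      have m1: "\<sigma>1 j \<in> fb j" using s1 j by (rule PiE_mem)
      have "\<sigma>1 j \<in> \<sigma>2 ` \<tau>" using eq j unfolding G_def by blast
      then obtain k where k: "k \<in> \<tau>" "\<sigma>1 j = \<sigma>2 k" by blast
      have m2: "\<sigma>2 k \<in> fb k" using s2 k(1) by (rule PiE_mem)
      have "j = k" using m1 m2 k(2) unfolding fb_def by auto
      then show "\<sigma>1 j = \<sigma>2 j" using k(2) by simp
    qed
  qed
  have img: "G ` PiE \<tau> fb = {\<tau>'. \<tau>' \<subseteq> E1 \<and> inj_on \<pi> \<tau>' \<and> \<pi> ` \<tau>' = \<tau>}"
  proof
    show "G ` PiE \<tau> fb \<subseteq> {\<tau>'. \<tau>' \<subseteq> E1 \<and> inj_on \<pi> \<tau>' \<and> \<pi> ` \<tau>' = \<tau>}"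
    proof
      fix X assume "X \<in> G ` PiE \<tau> fb"
      then obtain \<sigma> where \<sigma>: "\<sigma> \<in> PiE \<tau> fb" "X = \<sigma> ` \<tau>" unfolding G_def by blast
      have m: "\<sigma> j \<in> E1 \<and> \<pi> (\<sigma> j) = j" if "j \<in> \<tau>" for j
        using PiE_mem[OF \<sigma>(1) that] unfolding fb_def by simp
      have "X \<subseteq> E1" using m \<sigma>(2) by blast
      moreover have "inj_on \<pi> X"
      proof (rule inj_onI)
        fix x y assume "x \<in> X" "y \<in> X" "\<pi> x = \<pi> y"
        then obtain i k where "i \<in> \<tau>" "k \<in> \<tau>" "x = \<sigma> i" "y = \<sigma> k" using \<sigma>(2) by blast
        then show "x = y" using m \<open>\<pi> x = \<pi> y\<close> by metis
      qed
      moreover have "\<pi> ` X = \<tau>"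
      proof
        show "\<pi> ` X \<subseteq> \<tau>" using m \<sigma>(2) by auto
        show "\<tau> \<subseteq> \<pi> ` X"
        proof
          fix j assume j: "j \<in> \<tau>"
          then have "\<pi> (\<sigma> j) = j" using m by blast
          then show "j \<in> \<pi> ` X" using \<sigma>(2) j by (metis image_eqI)
        qed
      qed
      ultimately show "X \<in> {\<tau>'. \<tau>' \<subseteq> E1 \<and> inj_on \<pi> \<tau>' \<and> \<pi> ` \<tau>' = \<tau>}" by blast
    qed
    show "{\<tau>'. \<tau>' \<subseteq> E1 \<and> inj_on \<pi> \<tau>' \<and> \<pi> ` \<tau>' = \<tau>} \<subseteq> G ` PiE \<tau> fb"
    proof
      fix X assume "X \<in> {\<tau>'. \<tau>' \<subseteq> E1 \<and> inj_on \<pi> \<tau>' \<and> \<pi> ` \<tau>' = \<tau>}"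
      then have X: "X \<subseteq> E1" "inj_on \<pi> X" "\<pi> ` X = \<tau>" by auto
      define \<sigma> where "\<sigma> = restrict (\<lambda>j. the_inv_into X \<pi> j) \<tau>"
      have "\<sigma> \<in> PiE \<tau> fb"
        unfolding \<sigma>_def
      proof (rule restrict_PiE_iff[THEN iffD2], intro ballI)
        fix j assume j: "j \<in> \<tau>"
        have "the_inv_into X \<pi> j \<in> E1" using the_inv_into_into[OF X(2) _ X(1)] j X(3) by blast
        moreover have "\<pi> (the_inv_into X \<pi> j) = j" using f_the_inv_into_f[OF X(2)] j X(3) by blast
        ultimately show "the_inv_into X \<pi> j \<in> fb j" unfolding fb_def by simp
      qed
      moreover have "G \<sigma> = X"
      proof
        show "G \<sigma> \<subseteq> X"
        proof
          fix x assume "x \<in> G \<sigma>"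
          then obtain j where j: "j \<in> \<tau>" "x = \<sigma> j" unfolding G_def by blast
          then have "x = the_inv_into X \<pi> j" unfolding \<sigma>_def by simp
          then show "x \<in> X" using the_inv_into_into[OF X(2) _ order_refl] j X(3) by blast
        qed
        show "X \<subseteq> G \<sigma>"
        proof
          fix x assume x: "x \<in> X"
          then have px: "\<pi> x \<in> \<tau>" using X(3) by blast
          have "\<sigma> (\<pi> x) = x" unfolding \<sigma>_def using px the_inv_into_f_f[OF X(2) x] by simp
          then show "x \<in> G \<sigma>" unfolding G_def using px by (metis image_eqI)
        qed
      qed
      ultimately show "X \<in> G ` PiE \<tau> fb" by blast
    qed
  qed
  have "card {\<tau>'. \<tau>' \<subseteq> E1 \<and> inj_on \<pi> \<tau>' \<and> \<pi> ` \<tau>' = \<tau>} = card (PiE \<tau> fb)"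
    using card_image[OF inj] img by simp
  also have "\<dots> = (\<Prod>j\<in>\<tau>. card (fb j))" using card_PiE[OF fin] .
  also have "\<dots> = (\<Prod>j\<in>\<tau>. c)" using fib unfolding fb_def by simp
  finally show ?thesis by simp
qed

lemma sc_weight:
  fixes \<pi> :: "'e1 \<Rightarrow> 'e0" and C F :: "'e0 \<Rightarrow> nat"
  assumes finE0: "finite E0" and finE1: "finite E1" and im: "\<pi> ` E1 \<subseteq> E0"
    and fib: "\<forall>j\<in>E0. card {j'\<in>E1. \<pi> j' = j} = c" and c1: "c \<ge> 1"
    and s: "\<tau>' \<subseteq> E1" and inj: "inj_on \<pi> \<tau>'" and img: "\<pi> ` \<tau>' = \<tau>"
  shows "(\<Prod>j'\<in>E1. if j' \<in> \<tau>' then C (\<pi> j') else F (\<pi> j')) =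
    (\<Prod>j\<in>E0. F j ^ (c - 1)) * (\<Prod>j\<in>E0. if j \<in> \<tau> then C j else F j)"
proof -
  define h where "h j' = (if j' \<in> \<tau>' then C (\<pi> j') else F (\<pi> j'))" for j'
  define fb where "fb j = {j'\<in>E1. \<pi> j' = j}" for j
  have grp: "(\<Prod>j\<in>E0. prod h (fb j)) = prod h E1"
    unfolding fb_def using prod.group[OF finE1 finE0 im, of h] by simp
  have each: "prod h (fb j) = F j ^ (c - 1) * (if j \<in> \<tau> then C j else F j)" if j: "j \<in> E0" for j
  proof -
    define A where "A = fb j \<inter> \<tau>'"
    define B where "B = fb j - \<tau>'"
    have finfb: "finite (fb j)" unfolding fb_def using finE1 by simp
    have cfb: "card (fb j) = c" using fib j unfolding fb_def by simp
    have AB: "fb j = A \<union> B" "A \<inter> B = {}" unfolding A_def B_def by auto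
    have finA: "finite A" "finite B" using finfb AB(1) by auto
    have pA: "prod h A = C j ^ card A"
    proof -
      have "prod h A = prod (\<lambda>_. C j) A"
        by (rule prod.cong) (auto simp: h_def A_def fb_def)
      then show ?thesis by simp
    qed
    have pB: "prod h B = F j ^ card B"
    proof -
      have "prod h B = prod (\<lambda>_. F j) B"
        by (rule prod.cong) (auto simp: h_def B_def fb_def)
      then show ?thesis by simp
    qed
    have cA: "card A = (if j \<in> \<tau> then 1 else 0)"
    proof (cases "j \<in> \<tau>")
      case True
      then obtain x where x: "x \<in> \<tau>'" "\<pi> x = j" using img by blast
      have "A = {x}"
      proof
        show "{x} \<subseteq> A" unfolding A_def fb_def using x s by auto
        show "A \<subseteq> {x}"
        proof
          fix y assume "y \<in> A"
          then have "y \<in> \<tau>'" "\<pi> y = j" unfolding A_def fb_def by auto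
          then show "y \<in> {x}" using inj x unfolding inj_on_def by auto
        qed
      qed
      then show ?thesis using True by simp
    next
      case False
      have "A = {}" unfolding A_def fb_def using False img by auto
      then show ?thesis using False by simp
    qed
    have cB: "card B = c - card A"
    proof -
      have "card (fb j) = card A + card B" using AB finA card_Un_disjoint by metis
      then show ?thesis using cfb by simp
    qed
    have "prod h (fb j) = prod h A * prod h B" using AB finA prod.union_disjoint by metis
    also have "\<dots> = C j ^ card A * F j ^ card B" using pA pB by simp
    finally show ?thesis
    proof (cases "j \<in> \<tau>")
      case True
      assume "prod h (fb j) = C j ^ card A * F j ^ card B"
      then show ?thesis using True cA cB by simp
    next
      case False
      assume "prod h (fb j) = C j ^ card A * F j ^ card B"
      then have "prod h (fb j) = F j ^ c" using False cA cB by simp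
      also have "\<dots> = F j ^ (c - 1) * F j" using c1 by (metis Suc_diff_1 less_eq_Suc_le One_nat_def power_Suc2)
      finally show ?thesis using False by simp
    qed
  qed
  have "prod h E1 = (\<Prod>j\<in>E0. F j ^ (c - 1) * (if j \<in> \<tau> then C j else F j))"
    using grp each by simp
  also have "\<dots> = (\<Prod>j\<in>E0. F j ^ (c - 1)) * (\<Prod>j\<in>E0. if j \<in> \<tau> then C j else F j)"
    by (rule prod.distrib)
  finally show ?thesis unfolding h_def .
qed

lemma scale:
  fixes \<pi> :: "'e1 \<Rightarrow> 'e0" and C F :: "'e0 \<Rightarrow> nat"
    and eH1 :: "'e1 \<Rightarrow> 'v \<times> 'v" and eH0 :: "'e0 \<Rightarrow> 'v \<times> 'v"
  assumes finR: "finite R" and Rne: "R \<noteq> {}" and finE0: "finite E0" and finE1: "finite E1"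
    and im: "\<pi> ` E1 \<subseteq> E0"
    and fib: "\<forall>j\<in>E0. card {j'\<in>E1. \<pi> j' = j} = c" and c1: "c \<ge> 1"
    and eq: "\<forall>j\<in>E1. eH1 j = eH0 (\<pi> j)"
    and eR: "\<forall>j\<in>E0. eH0 j \<in> R \<times> R"
  shows "(\<Sum>\<tau>'\<in>{\<tau>'. spanning_tree R E1 eH1 \<tau>'}. \<Prod>j'\<in>E1. if j' \<in> \<tau>' then C (\<pi> j') else F (\<pi> j')) =
    c ^ (card R - 1) * (\<Prod>j\<in>E0. F j ^ (c - 1)) *
    (\<Sum>\<tau>\<in>{\<tau>. spanning_tree R E0 eH0 \<tau>}. \<Prod>j\<in>E0. if j \<in> \<tau> then C j else F j)"
proof -
  define ST1 where "ST1 = {\<tau>'. spanning_tree R E1 eH1 \<tau>'}"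
  define ST0 where "ST0 = {\<tau>. spanning_tree R E0 eH0 \<tau>}"
  define w1 where "w1 \<tau>' = (\<Prod>j'\<in>E1. if j' \<in> \<tau>' then C (\<pi> j') else F (\<pi> j'))" for \<tau>'
  define w0 where "w0 \<tau> = (\<Prod>j\<in>E0. if j \<in> \<tau> then C j else F j)" for \<tau>
  define K where "K = (\<Prod>j\<in>E0. F j ^ (c - 1))"
  have ST1_sub: "\<tau>' \<subseteq> E1" if "\<tau>' \<in> ST1" for \<tau>' using that unfolding ST1_def spanning_tree_def by blast
  have ST0_sub: "\<tau> \<subseteq> E0" if "\<tau> \<in> ST0" for \<tau> using that unfolding ST0_def spanning_tree_def by blast
  have finST1: "finite ST1"
  proof -
    have "ST1 \<subseteq> Pow E1" using ST1_sub by blast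
    then show ?thesis using finE1 finite_subset by blast
  qed
  have finST0: "finite ST0"
  proof -
    have "ST0 \<subseteq> Pow E0" using ST0_sub by blast
    then show ?thesis using finE0 finite_subset by blast
  qed
  have stiff: "\<tau>' \<in> ST1 \<longleftrightarrow> \<tau>' \<subseteq> E1 \<and> inj_on \<pi> \<tau>' \<and> \<pi> ` \<tau>' \<in> ST0" for \<tau>'
  proof (cases "\<tau>' \<subseteq> E1")
    case True
    then show ?thesis using sc_ST[of E1 eH1 eH0 \<pi> E0 \<tau>' R] eq im unfolding ST1_def ST0_def by blast
  next
    case False then show ?thesis using ST1_sub by blast
  qed
  have map: "(\<lambda>\<tau>'. \<pi> ` \<tau>') ` ST1 \<subseteq> ST0" using stiff by blast
  have "sum w1 ST1 = (\<Sum>\<tau>\<in>ST0. sum w1 {\<tau>'. \<tau>' \<in> ST1 \<and> \<pi> ` \<tau>' = \<tau>})"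
    using sum.group[OF finST1 finST0 map, of w1] by simp
  also have "\<dots> = (\<Sum>\<tau>\<in>ST0. c ^ (card R - 1) * K * w0 \<tau>)"
  proof (rule sum.cong[OF refl])
    fix \<tau> assume t: "\<tau> \<in> ST0"
    have setq: "{\<tau>'. \<tau>' \<in> ST1 \<and> \<pi> ` \<tau>' = \<tau>} = {\<tau>'. \<tau>' \<subseteq> E1 \<and> inj_on \<pi> \<tau>' \<and> \<pi> ` \<tau>' = \<tau>}"
      using stiff t by blast
    have wt: "w1 \<tau>' = K * w0 \<tau>" if "\<tau>' \<in> {\<tau>'. \<tau>' \<subseteq> E1 \<and> inj_on \<pi> \<tau>' \<and> \<pi> ` \<tau>' = \<tau>}" for \<tau>'
      using that sc_weight[OF finE0 finE1 im fib c1, of \<tau>' \<tau> C F] unfolding w1_def w0_def K_def by blast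
    have fint: "finite \<tau>" using ST0_sub[OF t] finE0 finite_subset by blast
    have fib': "\<forall>j\<in>\<tau>. card {j'\<in>E1. \<pi> j' = j} = c" using fib ST0_sub[OF t] by blast
    have ct: "card \<tau> + 1 = card R"
      using spanning_tree_card[OF finR Rne finE0 eR] t unfolding ST0_def by blast
    have "sum w1 {\<tau>'. \<tau>' \<in> ST1 \<and> \<pi> ` \<tau>' = \<tau>} = sum (\<lambda>_. K * w0 \<tau>) {\<tau>'. \<tau>' \<subseteq> E1 \<and> inj_on \<pi> \<tau>' \<and> \<pi> ` \<tau>' = \<tau>}"
      unfolding setq using wt by (rule sum.cong[OF refl])
    also have "\<dots> = c ^ card \<tau> * (K * w0 \<tau>)"
      using sc_fiber_count[OF finE1 fint fib'] by simp
    also have "\<dots> = c ^ (card R - 1) * K * w0 \<tau>"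
    proof -
      have "card R - 1 = card \<tau>" using ct by simp
      then show ?thesis by (simp add: mult.assoc)
    qed
    finally show "sum w1 {\<tau>'. \<tau>' \<in> ST1 \<and> \<pi> ` \<tau>' = \<tau>} = c ^ (card R - 1) * K * w0 \<tau>" .
  qed
  also have "\<dots> = c ^ (card R - 1) * K * sum w0 ST0" by (simp add: sum_distrib_left)
  finally show ?thesis unfolding ST1_def ST0_def w1_def w0_def K_def .
qed

lemma set_hd_last_mid:
  assumes "length xs \<ge> 2"
  shows "set xs = {hd xs, last xs} \<union> set (butlast (tl xs))"
proof -
  obtain x ys where xs: "xs = x # ys" using assms by (cases xs) auto
  have ys: "ys \<noteq> []" using assms xs by auto
  have "set ys = set (butlast ys) \<union> {last ys}"
    using append_butlast_last_id[OF ys] by (metis set_append Un_commute insert_is_Un list.set(1) list.simps(15))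
  then show ?thesis using xs ys by auto
qed

lemma adm_path_props:
  assumes "adm_path E ends m (es, vs)"
  shows "edge_verts ends (set es) \<subseteq> set vs" "hd vs \<in> edge_verts ends (set es)"
    "last vs \<in> edge_verts ends (set es)"
    "set vs = {hd vs, last vs} \<union> set (butlast (tl vs))"
    "\<forall>w\<in>set (butlast (tl vs)). \<not> ramified m w"
    "ramified m (hd vs)" "ramified m (last vs)" "set es \<subseteq> E" "es \<noteq> []"
proof -
  have A: "es \<noteq> []" "length vs = length es + 1" "set es \<subseteq> E"
    "\<forall>i<length es. ends (es!i) = (vs!i, vs!Suc i) \<or> ends (es!i) = (vs!Suc i, vs!i)"
    "ramified m (hd vs)" "ramified m (last vs)" "\<forall>w\<in>set (butlast (tl vs)). \<not> ramified m w"
    using assms unfolding adm_path_def by auto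
  show "ramified m (hd vs)" "ramified m (last vs)" "set es \<subseteq> E" "es \<noteq> []"
    "\<forall>w\<in>set (butlast (tl vs)). \<not> ramified m w" using A by auto
  show "edge_verts ends (set es) \<subseteq> set vs"
  proof
    fix x assume "x \<in> edge_verts ends (set es)"
    then obtain e where e: "e \<in> set es" "x = fst (ends e) \<or> x = snd (ends e)"
      unfolding edge_verts_def by auto
    then obtain i where i: "i < length es" "e = es!i" by (metis in_set_conv_nth)
    have "vs!i \<in> set vs" "vs!Suc i \<in> set vs" using i A(2) by auto
    then show "x \<in> set vs" using A(4) i e(2) by fastforce
  qed
  have l2: "length vs \<ge> 2" using A(1,2) by (cases es) auto
  show "set vs = {hd vs, last vs} \<union> set (butlast (tl vs))" using set_hd_last_mid[OF l2] .
  have vne: "vs \<noteq> []" using l2 by auto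
  have e0: "es!0 \<in> set es" using A(1) by simp
  have "ends (es!0) = (vs!0, vs!Suc 0) \<or> ends (es!0) = (vs!Suc 0, vs!0)" using A(1,4) by auto
  then have "vs!0 \<in> edge_verts ends (set es)" unfolding edge_verts_def using e0
    by (metis UnI1 UnI2 fst_conv image_eqI snd_conv)
  then show "hd vs \<in> edge_verts ends (set es)" using vne by (simp add: hd_conv_nth)
  define k where "k = length es - 1"
  have k: "k < length es" "Suc k = length es" using A(1) unfolding k_def by (cases es; auto)+
  have ek: "es!k \<in> set es" using k by simp
  have "ends (es!k) = (vs!k, vs!Suc k) \<or> ends (es!k) = (vs!Suc k, vs!k)" using A(4) k(1) by blast
  then have "vs!Suc k \<in> edge_verts ends (set es)" unfolding edge_verts_def using ek
    by (metis UnI1 UnI2 fst_conv image_eqI snd_conv)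
  moreover have "last vs = vs!Suc k" using vne A(2) k(2) by (simp add: last_conv_nth)
  ultimately show "last vs \<in> edge_verts ends (set es)" by simp
qed

lemma path_groups_basic:
  assumes G: "G \<in> path_groups Ps" and ne: "\<forall>P\<in>Ps. path_edges P \<noteq> {}"
  shows "G \<noteq> {}" "G \<subseteq> Ps"
proof -
  obtain x where x: "x \<in> Ps" "G = ((share_rel Ps)\<^sup>+) `` {x}"
    using G unfolding path_groups_def quotient_def by blast
  have "(x,x) \<in> share_rel Ps" using x(1) ne unfolding share_rel_def by auto
  then show "G \<noteq> {}" using x(2) by auto
  have "share_rel Ps \<subseteq> Ps \<times> Ps" unfolding share_rel_def by auto
  then have "(share_rel Ps)\<^sup>+ \<subseteq> Ps \<times> Ps" by (rule trancl_subset_Sigma)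
  then show "G \<subseteq> Ps" using x(2) by blast
qed

lemma edge_verts_group:
  "y \<in> edge_verts ends (group_edges G) \<Longrightarrow> \<exists>P\<in>G. y \<in> edge_verts ends (path_edges P)"
  unfolding edge_verts_def group_edges_def by auto

lemma edge_verts_group2:
  "P \<in> G \<Longrightarrow> edge_verts ends (path_edges P) \<subseteq> edge_verts ends (group_edges G)"
  unfolding edge_verts_def group_edges_def by auto

lemma group_ram:
  assumes adm: "\<forall>P\<in>G. adm_path E ends m P" and ends_eq: "\<forall>P\<in>G. path_ends P = Z" and ne: "G \<noteq> {}"
  shows "{v \<in> edge_verts ends (group_edges G). ramified m v} = Z"
proof
  show "{v \<in> edge_verts ends (group_edges G). ramified m v} \<subseteq> Z"
  proof
    fix y assume "y \<in> {v \<in> edge_verts ends (group_edges G). ramified m v}"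
    then have y: "y \<in> edge_verts ends (group_edges G)" "ramified m y" by auto
    then obtain P where P: "P \<in> G" "y \<in> edge_verts ends (path_edges P)" using edge_verts_group by metis
    obtain es vs where Pe: "P = (es, vs)" by (cases P)
    have ad: "adm_path E ends m (es, vs)" using adm P(1) Pe by simp
    note pp = adm_path_props[OF ad]
    have "y \<in> set vs" using P(2) pp(1) Pe unfolding path_edges_def by auto
    then have "y \<in> {hd vs, last vs}" using pp(4) pp(5) y(2) by blast
    then show "y \<in> Z" using ends_eq P(1) Pe unfolding path_ends_def by auto
  qed
  show "Z \<subseteq> {v \<in> edge_verts ends (group_edges G). ramified m v}"
  proof
    fix z assume z: "z \<in> Z"
    obtain P where P: "P \<in> G" using ne by blast
    obtain es vs where Pe: "P = (es, vs)" by (cases P)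
    have ad: "adm_path E ends m (es, vs)" using adm P Pe by simp
    note pp = adm_path_props[OF ad]
    have "z \<in> {hd vs, last vs}" using ends_eq P Pe z unfolding path_ends_def by auto
    then have "z \<in> edge_verts ends (set es) \<and> ramified m z" using pp(2,3,6,7) by auto
    then show "z \<in> {v \<in> edge_verts ends (group_edges G). ramified m v}"
      using edge_verts_group2[OF P, of ends] Pe unfolding path_edges_def by auto
  qed
qed

lemma group_sub:
  assumes adm: "\<forall>P\<in>G. adm_path E ends m P"
  shows "group_edges G \<subseteq> E"
  using adm adm_path_props(8) unfolding group_edges_def path_edges_def by fastforce

lemma group_ne:
  assumes adm: "\<forall>P\<in>G. adm_path E ends m P" and ne: "G \<noteq> {}"
  shows "group_edges G \<noteq> {}"
proof -
  obtain P where P: "P \<in> G" using ne by blast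
  obtain es vs where Pe: "P = (es, vs)" by (cases P)
  have "es \<noteq> []" using adm_path_props(9)[of E ends m es vs] adm P Pe by simp
  moreover have "set es \<subseteq> group_edges G" using P Pe unfolding group_edges_def path_edges_def by auto
  ultimately show ?thesis by auto
qed

lemma dec_parts:
  assumes dec: "has_segment_decomposition V E ends m"
  shows "\<forall>G\<in>path_groups (two_paths E ends m). \<exists>v v'. \<forall>P\<in>G. path_ends P = {v, v'}"
    "\<forall>G\<in>path_groups (one_paths E ends m). \<exists>v. \<forall>P\<in>G. path_ends P = {v}"
    "\<forall>S\<in>segments E ends m. \<forall>S'\<in>segments E ends m. S \<noteq> S' \<longrightarrow>
         S \<inter> S' = {} \<and> edge_verts ends S \<inter> edge_verts ends S' \<subseteq> {v. ramified m v}"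
    "\<Union>(segments E ends m) = E"
    "(\<Union>S\<in>segments E ends m. edge_verts ends S) = V"
proof -
  note d = dec[unfolded has_segment_decomposition_def]
  show "\<forall>G\<in>path_groups (two_paths E ends m). \<exists>v v'. \<forall>P\<in>G. path_ends P = {v, v'}"
    using d by (rule conjunct1)
  show "\<forall>G\<in>path_groups (one_paths E ends m). \<exists>v. \<forall>P\<in>G. path_ends P = {v}"
    using d by (elim conjE)
  show "\<forall>S\<in>segments E ends m. \<forall>S'\<in>segments E ends m. S \<noteq> S' \<longrightarrow>
         S \<inter> S' = {} \<and> edge_verts ends S \<inter> edge_verts ends S' \<subseteq> {v. ramified m v}"
    using d by (elim conjE)
  show "\<Union>(segments E ends m) = E" using d by (elim conjE)
  show "(\<Union>S\<in>segments E ends m. edge_verts ends S) = V" using d by (elim conjE)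
qed

lemma adm_ne: "adm_path E ends m P \<Longrightarrow> path_edges P \<noteq> {}"
  using adm_path_props(9)[of E ends m "fst P" "snd P"] unfolding path_edges_def by simp

lemma seg_struct:
  assumes dec: "has_segment_decomposition V E ends m" and S: "S \<in> segments E ends m"
  shows "S \<subseteq> E \<and> S \<noteq> {} \<and>
    (\<exists>u w. {v \<in> edge_verts ends S. ramified m v} = {u, w} \<and> (u \<noteq> w \<longleftrightarrow> S \<in> segs2 E ends m))"
proof (cases "S \<in> segs2 E ends m")
  case True
  then obtain G where G: "G \<in> path_groups (two_paths E ends m)" "S = group_edges G"
    unfolding segs2_def by blast
  have neP: "\<forall>P\<in>two_paths E ends m. path_edges P \<noteq> {}"
    unfolding two_paths_def using adm_ne by blast
  note gb = path_groups_basic[OF G(1) neP]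
  obtain v v' where vv: "\<forall>P\<in>G. path_ends P = {v, v'}" using dec_parts(1)[OF dec] G(1) by blast
  have adm: "\<forall>P\<in>G. adm_path E ends m P" using gb(2) unfolding two_paths_def by auto
  have r: "{x \<in> edge_verts ends S. ramified m x} = {v, v'}" using group_ram[OF adm vv gb(1)] G(2) by simp
  obtain P where P: "P \<in> G" using gb(1) by blast
  have "hd (snd P) \<noteq> last (snd P)" using gb(2) P unfolding two_paths_def by auto
  moreover have "{hd (snd P), last (snd P)} = {v, v'}" using vv P unfolding path_ends_def by simp
  ultimately have vne: "v \<noteq> v'" by auto
  have ex: "\<exists>u w. {x \<in> edge_verts ends S. ramified m x} = {u, w} \<and> (u \<noteq> w \<longleftrightarrow> S \<in> segs2 E ends m)"
  proof (intro exI conjI)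
    show "{x \<in> edge_verts ends S. ramified m x} = {v, v'}" by (rule r)
    show "v \<noteq> v' \<longleftrightarrow> S \<in> segs2 E ends m" using vne True by simp
  qed
  have "S \<subseteq> E" using group_sub[OF adm] G(2) by simp
  moreover have "S \<noteq> {}" using group_ne[OF adm gb(1)] G(2) by simp
  ultimately show ?thesis using ex by (intro conjI)
next
  case False
  then have S1: "S \<in> segs1 E ends m" using S unfolding segments_def by blast
  then obtain G where G: "G \<in> path_groups (one_paths E ends m)" "S = group_edges G"
    unfolding segs1_def by blast
  have neP: "\<forall>P\<in>one_paths E ends m. path_edges P \<noteq> {}"
    unfolding one_paths_def using adm_ne by blast
  note gb = path_groups_basic[OF G(1) neP]
  obtain v where vv: "\<forall>P\<in>G. path_ends P = {v}" using dec_parts(2)[OF dec] G(1) by blast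
  have adm: "\<forall>P\<in>G. adm_path E ends m P" using gb(2) unfolding one_paths_def by auto
  have r: "{x \<in> edge_verts ends S. ramified m x} = {v, v}" using group_ram[OF adm vv gb(1)] G(2) by simp
  have ex: "\<exists>u w. {x \<in> edge_verts ends S. ramified m x} = {u, w} \<and> (u \<noteq> w \<longleftrightarrow> S \<in> segs2 E ends m)"
  proof (intro exI conjI)
    show "{x \<in> edge_verts ends S. ramified m x} = {v, v}" by (rule r)
    show "v \<noteq> v \<longleftrightarrow> S \<in> segs2 E ends m" using False by simp
  qed
  have "S \<subseteq> E" using group_sub[OF adm] G(2) by simp
  moreover have "S \<noteq> {}" using group_ne[OF adm gb(1)] G(2) by simp
  ultimately show ?thesis using ex by (intro conjI)
qed

lemma segs_disjoint:
  assumes dec: "has_segment_decomposition V E ends m"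
  shows "segs1 E ends m \<inter> segs2 E ends m = {}"
proof (rule ccontr)
  assume "segs1 E ends m \<inter> segs2 E ends m \<noteq> {}"
  then obtain S where S: "S \<in> segs1 E ends m" "S \<in> segs2 E ends m" by blast
  have Sseg: "S \<in> segments E ends m" using S unfolding segments_def by blast
  have ne: "S \<noteq> {}" using seg_struct[OF dec Sseg] by blast
  obtain G where G: "G \<in> path_groups (one_paths E ends m)" "S = group_edges G"
    using S(1) unfolding segs1_def by blast
  have neP: "\<forall>P\<in>one_paths E ends m. path_edges P \<noteq> {}"
    unfolding one_paths_def using adm_ne by blast
  have "G \<subseteq> one_paths E ends m" using path_groups_basic[OF G(1) neP] by blast
  then have "S \<subseteq> E - \<Union>(segs2 E ends m)" using G(2) unfolding one_paths_def group_edges_def by blast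
  then show False using S(2) ne by blast
qed

lemma rtrancl_map_inj:
  assumes inj: "inj \<phi>"
  shows "((\<phi> x, \<phi> y) \<in> (map_prod \<phi> \<phi> ` R)\<^sup>*) \<longleftrightarrow> ((x,y) \<in> R\<^sup>*)"
proof
  assume "(x,y) \<in> R\<^sup>*"
  then show "(\<phi> x, \<phi> y) \<in> (map_prod \<phi> \<phi> ` R)\<^sup>*"
  proof (induction rule: rtrancl_induct)
    case base then show ?case by simp
  next
    case (step y z)
    have "(\<phi> y, \<phi> z) \<in> map_prod \<phi> \<phi> ` R" using step(2) by force
    with step(3) show ?case by (rule rtrancl_into_rtrancl)
  qed
next
  have gen: "\<exists>y'. v = \<phi> y' \<and> (x,y') \<in> R\<^sup>*" if "(u,v) \<in> (map_prod \<phi> \<phi> ` R)\<^sup>*" "u = \<phi> x" for u v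
    using that
  proof (induction rule: rtrancl_induct)
    case base then show ?case by blast
  next
    case (step v w)
    obtain y' where y': "v = \<phi> y'" "(x,y') \<in> R\<^sup>*" using step(3) step(4) by blast
    obtain y1 y2 where yy: "(y1,y2) \<in> R" "v = \<phi> y1" "w = \<phi> y2" using step(2) by auto
    have "y1 = y'" using yy(2) y'(1) inj by (simp add: inj_eq)
    then have "(x,y2) \<in> R\<^sup>*" using y'(2) yy(1) by simp
    then show ?case using yy(3) by blast
  qed
  assume "(\<phi> x, \<phi> y) \<in> (map_prod \<phi> \<phi> ` R)\<^sup>*"
  then obtain y' where "\<phi> y = \<phi> y'" "(x,y') \<in> R\<^sup>*" using gen by blast
  then show "(x,y) \<in> R\<^sup>*" using inj by (simp add: inj_eq)
qed

lemma adj_map: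
  assumes "\<forall>e\<in>f. ends' (h e) = map_prod \<phi> \<phi> (ends e)"
  shows "adj ends' (h ` f) = map_prod \<phi> \<phi> ` adj ends f"
proof
  show "adj ends' (h ` f) \<subseteq> map_prod \<phi> \<phi> ` adj ends f"
  proof
    fix z assume "z \<in> adj ends' (h ` f)"
    then obtain u v e where z: "z = (u,v)" "e \<in> f" "ends' (h e) = (u,v) \<or> ends' (h e) = (v,u)"
      unfolding adj_def by auto
    obtain x y where xy: "ends e = (x,y)" by (cases "ends e")
    have "ends' (h e) = (\<phi> x, \<phi> y)" using assms z(2) xy by simp
    then have "(u,v) = map_prod \<phi> \<phi> (x,y) \<and> (x,y) \<in> adj ends f \<or> (u,v) = map_prod \<phi> \<phi> (y,x) \<and> (y,x) \<in> adj ends f"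
      using z(2,3) xy unfolding adj_def by auto
    then show "z \<in> map_prod \<phi> \<phi> ` adj ends f" using z(1) by blast
  qed
  show "map_prod \<phi> \<phi> ` adj ends f \<subseteq> adj ends' (h ` f)"
  proof
    fix z assume "z \<in> map_prod \<phi> \<phi> ` adj ends f"
    then obtain x y e where z: "z = (\<phi> x, \<phi> y)" "e \<in> f" "ends e = (x,y) \<or> ends e = (y,x)"
      unfolding adj_def by auto
    have "ends' (h e) = (\<phi> x, \<phi> y) \<or> ends' (h e) = (\<phi> y, \<phi> x)" using assms z(2,3) by auto
    then show "z \<in> adj ends' (h ` f)" using z(1,2) unfolding adj_def by auto
  qed
qed

lemma reach_map:
  assumes "\<forall>e\<in>f. ends' (h e) = map_prod \<phi> \<phi> (ends e)" and "inj \<phi>"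
  shows "((\<phi> x, \<phi> y) \<in> reach ends' (h ` f)) \<longleftrightarrow> ((x,y) \<in> reach ends f)"
proof -
  have "adj ends' (h ` f) = map_prod \<phi> \<phi> ` adj ends f" using adj_map[of f ends' h \<phi> ends] assms(1) by blast
  then show ?thesis unfolding reach_def using rtrancl_map_inj[OF assms(2), of x y "adj ends f"] by simp
qed

lemma forest_map:
  assumes em: "\<forall>e\<in>f. ends' (h e) = map_prod \<phi> \<phi> (ends e)" and inj: "inj \<phi>" and injh: "inj_on h f"
  shows "forest ends' (h ` f) \<longleftrightarrow> forest ends f"
proof -
  have key: "ends' (h e) \<in> reach ends' (h ` f - {h e}) \<longleftrightarrow> ends e \<in> reach ends (f - {e})" if e: "e \<in> f" for e
  proof -
    have "h ` f - {h e} = h ` (f - {e})" using inj_on_image_set_diff[OF injh, of f "{e}"] e by auto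
    moreover obtain x y where xy: "ends e = (x,y)" by (cases "ends e")
    moreover have "ends' (h e) = (\<phi> x, \<phi> y)" using em e xy by simp
    moreover have "\<forall>e\<in>f - {e}. ends' (h e) = map_prod \<phi> \<phi> (ends e)" using em by blast
    ultimately show ?thesis using reach_map[of "f - {e}" ends' h \<phi> ends x y] inj by simp
  qed
  show ?thesis
  proof
    assume fo: "forest ends' (h ` f)"
    show "forest ends f" unfolding forest_def
    proof
      fix e assume e: "e \<in> f"
      have "h e \<in> h ` f" using e by simp
      then show "ends e \<notin> reach ends (f - {e})" using fo key[OF e] unfolding forest_def by blast
    qed
  next
    assume fo: "forest ends f"
    show "forest ends' (h ` f)" unfolding forest_def
    proof
      fix e' assume "e' \<in> h ` f"
      then obtain e where e: "e \<in> f" "e' = h e" by blast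
      show "ends' e' \<notin> reach ends' (h ` f - {e'})" using fo key[OF e(1)] e unfolding forest_def by blast
    qed
  qed
qed

lemma ram_exp_unram: "\<not> ramified m x \<Longrightarrow> ram_exp m n x = n"
  unfolding ramified_def ram_exp_def by simp

lemma ram_exp_le: "ram_exp m n x \<le> n"
  unfolding ram_exp_def by (cases "m x") auto

lemma layer_ends_eq: "layer_ends p ends m n (e,g) =
   ((fst (ends e), g mod p ^ ram_exp m n (fst (ends e))), (snd (ends e), g mod p ^ ram_exp m n (snd (ends e))))"
  unfolding layer_ends_def by simp

locale tower =
  fixes p :: nat and V :: "'v set" and E :: "'e set" and ends :: "'e \<Rightarrow> 'v \<times> 'v" and m :: "'v \<Rightarrow> enat"
  assumes p2: "p \<ge> 2" and gr: "is_graph V E ends" and tot: "\<exists>v\<in>V. totally_ramified m v"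
    and dec: "has_segment_decomposition V E ends m"
begin

definition segs where "segs = segments E ends m"
definition uw where "uw S = (SOME uw. {v \<in> edge_verts ends S. ramified m v} = {fst uw, snd uw} \<and>
   (fst uw \<noteq> snd uw \<longleftrightarrow> S \<in> segs2 E ends m))"
definition u where "u S = fst (uw S)"
definition w where "w S = snd (uw S)"

lemma finV: "finite V" and finE: "finite E" and endsVV: "\<forall>e\<in>E. ends e \<in> V \<times> V"
  using gr unfolding is_graph_def by auto

lemma p_pos: "p > 0" using p2 by simp

lemma seg_props:
  assumes S: "S \<in> segs"
  shows "S \<subseteq> E" "S \<noteq> {}" "{v \<in> edge_verts ends S. ramified m v} = {u S, w S}"
    "u S \<noteq> w S \<longleftrightarrow> S \<in> segs2 E ends m"
proof -
  have st: "S \<subseteq> E \<and> S \<noteq> {} \<and>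
    (\<exists>u w. {v \<in> edge_verts ends S. ramified m v} = {u, w} \<and> (u \<noteq> w \<longleftrightarrow> S \<in> segs2 E ends m))"
    using seg_struct[OF dec] S unfolding segs_def by blast
  then show "S \<subseteq> E" "S \<noteq> {}" by auto
  from st obtain x y where xy: "{v \<in> edge_verts ends S. ramified m v} = {x, y}" "x \<noteq> y \<longleftrightarrow> S \<in> segs2 E ends m"
    by blast
  have "{v \<in> edge_verts ends S. ramified m v} = {fst (uw S), snd (uw S)} \<and>
   (fst (uw S) \<noteq> snd (uw S) \<longleftrightarrow> S \<in> segs2 E ends m)"
    unfolding uw_def by (rule someI[of _ "(x,y)"]) (use xy in simp)
  then show "{v \<in> edge_verts ends S. ramified m v} = {u S, w S}"
    "u S \<noteq> w S \<longleftrightarrow> S \<in> segs2 E ends m" unfolding u_def w_def by auto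
qed

lemma ev_sub: "S \<in> segs \<Longrightarrow> edge_verts ends S \<subseteq> V"
proof -
  assume S: "S \<in> segs"
  have "\<forall>e\<in>S. ends e \<in> V \<times> V" using seg_props(1)[OF S] endsVV by blast
  then show ?thesis unfolding edge_verts_def by force
qed

lemma finsegs: "finite segs"
proof -
  have "segs \<subseteq> Pow E" using seg_props(1) by blast
  then show ?thesis using finE finite_subset by blast
qed

lemma seg_disj: "S \<in> segs \<Longrightarrow> S' \<in> segs \<Longrightarrow> S \<noteq> S' \<Longrightarrow>
   S \<inter> S' = {} \<and> edge_verts ends S \<inter> edge_verts ends S' \<subseteq> {v. ramified m v}"
  using dec_parts(3)[OF dec] unfolding segs_def by blast

lemma segs_coverE: "\<Union>segs = E" using dec_parts(4)[OF dec] unfolding segs_def .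
lemma segs_coverV: "(\<Union>S\<in>segs. edge_verts ends S) = V" using dec_parts(5)[OF dec] unfolding segs_def .

lemma uw_props: assumes "S \<in> segs"
  shows "u S \<in> edge_verts ends S" "w S \<in> edge_verts ends S" "ramified m (u S)" "ramified m (w S)"
  using seg_props(3)[OF assms] by blast+

lemma ram_uw: "S \<in> segs \<Longrightarrow> x \<in> edge_verts ends S \<Longrightarrow> ramified m x \<Longrightarrow> x = u S \<or> x = w S"
  using seg_props(3) by blast

definition phi where "phi n g x = (x, g mod p ^ ram_exp m n x)"

lemma phi_inj: "inj (phi n g)" unfolding phi_def by (rule injI) simp

lemma layer_ends_phi: "layer_ends p ends m n (e,g) = map_prod (phi n g) (phi n g) (ends e)"
  unfolding layer_ends_eq phi_def by (cases "ends e") simp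

lemma phi_unram: "\<not> ramified m x \<Longrightarrow> g < p ^ n \<Longrightarrow> phi n g x = (x, g)"
  unfolding phi_def using ram_exp_unram[of m x n] by simp

definition Rn where "Rn n = {x \<in> layer_verts p V m n. ramified m (fst x)}"
definition Jn where "Jn n = segs \<times> {0..<p^n}"
definition Pn where "Pn j = fst j \<times> {snd j}"
definition In where "In j = {(x, snd j) | x. x \<in> edge_verts ends (fst j) \<and> \<not> ramified m x}"
definition an where "an n j = phi n (snd j) (u (fst j))"
definition bn where "bn n j = phi n (snd j) (w (fst j))"

lemma phi_R: "S \<in> segs \<Longrightarrow> x \<in> edge_verts ends S \<Longrightarrow> ramified m x \<Longrightarrow> phi n g x \<in> Rn n"
  unfolding Rn_def layer_verts_def phi_def using ev_sub p_pos by auto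

lemma lv_fin: "finite (layer_verts p V m n)"
proof -
  have "layer_verts p V m n \<subseteq> V \<times> {0..<p^n}"
  proof
    fix z assume "z \<in> layer_verts p V m n"
    then obtain v a where z: "z = (v,a)" "v \<in> V" "a < p ^ ram_exp m n v" unfolding layer_verts_def by auto
    have "p ^ ram_exp m n v \<le> p ^ n" using ram_exp_le[of m n v] p_pos by (intro power_increasing) auto
    then show "z \<in> V \<times> {0..<p^n}" using z by auto
  qed
  then show "finite (layer_verts p V m n)" using finV finite_subset by blast
qed

lemma le_fin: "finite (layer_edges p E n)" unfolding layer_edges_def using finE by simp
lemma Jn_fin: "finite (Jn n)" unfolding Jn_def using finsegs by simp

lemma Rn_ne: "Rn n \<noteq> {}"
proof -
  obtain v0 where v0: "v0 \<in> V" "m v0 = 0" using tot unfolding totally_ramified_def by blast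
  have "(v0, 0) \<in> Rn n" unfolding Rn_def layer_verts_def ramified_def ram_exp_def using v0 p_pos
    by (simp add: zero_enat_def)
  then show "Rn n \<noteq> {}" by blast
qed

lemma V_eq_n: "layer_verts p V m n = Rn n \<union> (\<Union>j\<in>Jn n. In j)"
proof
  show "layer_verts p V m n \<subseteq> Rn n \<union> (\<Union>j\<in>Jn n. In j)"
  proof
    fix z assume z: "z \<in> layer_verts p V m n"
    then obtain x a where xa: "z = (x,a)" "x \<in> V" "a < p ^ ram_exp m n x" unfolding layer_verts_def by auto
    show "z \<in> Rn n \<union> (\<Union>j\<in>Jn n. In j)"
    proof (cases "ramified m x")
      case True then show ?thesis using z xa unfolding Rn_def by simp
    next
      case False
      then have an: "a < p ^ n" using xa ram_exp_unram by metis
      obtain S where S: "S \<in> segs" "x \<in> edge_verts ends S" using segs_coverV xa(2) by blast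
      have "z \<in> In (S,a)" unfolding In_def using xa S False by simp
      moreover have "(S,a) \<in> Jn n" unfolding Jn_def using S an by simp
      ultimately show ?thesis by blast
    qed
  qed
  show "Rn n \<union> (\<Union>j\<in>Jn n. In j) \<subseteq> layer_verts p V m n"
  proof
    fix z assume z: "z \<in> Rn n \<union> (\<Union>j\<in>Jn n. In j)"
    show "z \<in> layer_verts p V m n"
    proof (cases "z \<in> Rn n")
      case True then show ?thesis unfolding Rn_def by simp
    next
      case False
      then obtain j where j: "j \<in> Jn n" "z \<in> In j" using z by blast
    obtain S g where "j = (S,g)" by (cases j)
    then have Sg: "(S,g) \<in> Jn n" "z \<in> In (S,g)" using j by auto
      then obtain x where x: "z = (x,g)" "x \<in> edge_verts ends S" "\<not> ramified m x" unfolding In_def by auto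
      have "S \<in> segs" "g < p ^ n" using Sg(1) unfolding Jn_def by auto
      then show ?thesis unfolding layer_verts_def using x ev_sub ram_exp_unram[OF x(3)] by auto
    qed
  qed
qed

lemma RI_n: "\<forall>j\<in>Jn n. Rn n \<inter> In j = {}" unfolding Rn_def In_def by auto

lemma Idisj_n: "\<forall>j\<in>Jn n. \<forall>k\<in>Jn n. j \<noteq> k \<longrightarrow> In j \<inter> In k = {}"
proof (intro ballI impI)
  fix j k assume j: "j \<in> Jn n" and k: "k \<in> Jn n" and ne: "j \<noteq> k"
  show "In j \<inter> In k = {}"
  proof (rule ccontr)
    assume "In j \<inter> In k \<noteq> {}"
    then obtain x where x: "x \<in> edge_verts ends (fst j)" "x \<in> edge_verts ends (fst k)" "\<not> ramified m x"
      "snd j = snd k" unfolding In_def by auto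
    have "fst j \<in> segs" "fst k \<in> segs" using j k unfolding Jn_def by auto
    then have "fst j = fst k" using seg_disj x by blast
    then show False using ne x(4) by (simp add: prod_eq_iff)
  qed
qed

lemma E_eq_n: "layer_edges p E n = (\<Union>j\<in>Jn n. Pn j)"
proof
  show "layer_edges p E n \<subseteq> (\<Union>j\<in>Jn n. Pn j)"
  proof
    fix z assume "z \<in> layer_edges p E n"
    then obtain e g where z: "z = (e,g)" "e \<in> E" "g < p^n" unfolding layer_edges_def by auto
    then obtain S where S: "S \<in> segs" "e \<in> S" using segs_coverE by blast
    then have "(S,g) \<in> Jn n" "z \<in> Pn (S,g)" unfolding Jn_def Pn_def using z by auto
    then show "z \<in> (\<Union>j\<in>Jn n. Pn j)" by blast
  qed
  show "(\<Union>j\<in>Jn n. Pn j) \<subseteq> layer_edges p E n"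
  proof
    fix z assume "z \<in> (\<Union>j\<in>Jn n. Pn j)"
    then obtain S g where Sg: "S \<in> segs" "g < p ^ n" "z \<in> S \<times> {g}" unfolding Jn_def Pn_def by auto
    then have "S \<subseteq> E" using seg_props(1) by blast
    then show "z \<in> layer_edges p E n" unfolding layer_edges_def using Sg by auto
  qed
qed

lemma Pdisj_n: "\<forall>j\<in>Jn n. \<forall>k\<in>Jn n. j \<noteq> k \<longrightarrow> Pn j \<inter> Pn k = {}"
proof (intro ballI impI)
  fix j k assume j: "j \<in> Jn n" and k: "k \<in> Jn n" and ne: "j \<noteq> k"
  have s: "fst j \<in> segs" "fst k \<in> segs" using j k unfolding Jn_def by auto
  show "Pn j \<inter> Pn k = {}"
  proof (cases "fst j = fst k")
    case True then have "snd j \<noteq> snd k" using ne by (simp add: prod_eq_iff)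
    then show ?thesis unfolding Pn_def by auto
  next
    case False then have "fst j \<inter> fst k = {}" using seg_disj s by blast
    then show ?thesis unfolding Pn_def by auto
  qed
qed

lemma abR_n: "\<forall>j\<in>Jn n. an n j \<in> Rn n \<and> bn n j \<in> Rn n"
  unfolding Jn_def an_def bn_def using phi_R uw_props by auto

lemma Pends_n: "\<forall>j\<in>Jn n. \<forall>e\<in>Pn j. layer_ends p ends m n e \<in> insert (an n j) (insert (bn n j) (In j)) \<times> insert (an n j) (insert (bn n j) (In j))"
proof (intro ballI)
  fix j e assume j: "j \<in> Jn n" and e: "e \<in> Pn j"
  obtain S g where Sg: "j = (S,g)" by (cases j)
  have S: "S \<in> segs" "g < p ^ n" using j Sg unfolding Jn_def by auto
  obtain e0 where e0: "e = (e0, g)" "e0 \<in> S" using e Sg unfolding Pn_def by auto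
  have inV: "phi n g x \<in> insert (an n j) (insert (bn n j) (In j))" if x: "x \<in> edge_verts ends S" for x
  proof (cases "ramified m x")
    case True
    then have "x = u S \<or> x = w S" using ram_uw S(1) x by blast
    then show ?thesis unfolding an_def bn_def Sg by auto
  next
    case False
    then have "phi n g x = (x, g)" using phi_unram S(2) by blast
    then show ?thesis unfolding In_def Sg using x False by simp
  qed
  obtain x y where xy: "ends e0 = (x,y)" by (cases "ends e0")
  have "fst (ends e0) \<in> edge_verts ends S" "snd (ends e0) \<in> edge_verts ends S"
    unfolding edge_verts_def using e0(2) by blast+
  then have xyS: "x \<in> edge_verts ends S" "y \<in> edge_verts ends S" using xy by simp_all
  have le: "layer_ends p ends m n e = (phi n g x, phi n g y)" using layer_ends_phi[of n e0 g] xy e0(1) by simp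
  show "layer_ends p ends m n e \<in> insert (an n j) (insert (bn n j) (In j)) \<times> insert (an n j) (insert (bn n j) (In j))"
    unfolding le by (rule SigmaI[OF inV[OF xyS(1)] inV[OF xyS(2)]])
qed

lemma glue_n: "glue (layer_verts p V m n) (layer_edges p E n) (layer_ends p ends m n) (Rn n) (Jn n) Pn In (an n) (bn n)"
  by (rule glue.intro[OF lv_fin le_fin Jn_fin Rn_ne V_eq_n RI_n Idisj_n E_eq_n Pdisj_n abR_n Pends_n])

end

context tower begin

definition rokX where "rokX S f \<longleftrightarrow> (\<forall>x\<in>edge_verts ends S. (x, u S) \<in> reach ends f \<or> (x, w S) \<in> reach ends f)"
definition connX where "connX S f \<longleftrightarrow> u S \<noteq> w S \<and> (u S, w S) \<in> reach ends f"
definition CXs where "CXs S = {f. f \<subseteq> S \<and> forest ends f \<and> rokX S f \<and> connX S f}"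
definition SXs where "SXs S = {f. f \<subseteq> S \<and> forest ends f \<and> rokX S f \<and> \<not> connX S f}"

lemma VJ_eq:
  assumes S: "S \<in> segs" and g: "g < p ^ n"
  shows "glue.VJ In (an n) (bn n) (S,g) = phi n g ` edge_verts ends S"
proof -
  have vj: "glue.VJ In (an n) (bn n) (S,g) = insert (phi n g (u S)) (insert (phi n g (w S)) (In (S,g)))"
    using glue.VJ_def[OF glue_n] unfolding an_def bn_def by simp
  show ?thesis
  proof
    show "glue.VJ In (an n) (bn n) (S,g) \<subseteq> phi n g ` edge_verts ends S"
    proof
      fix z assume "z \<in> glue.VJ In (an n) (bn n) (S,g)"
      then consider "z = phi n g (u S)" | "z = phi n g (w S)" | "z \<in> In (S,g)" using vj by blast
      then show "z \<in> phi n g ` edge_verts ends S"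
      proof cases
        case 1 then show ?thesis using uw_props[OF S] by blast
      next
        case 2 then show ?thesis using uw_props[OF S] by blast
      next
        case 3
        then obtain x where x: "z = (x,g)" "x \<in> edge_verts ends S" "\<not> ramified m x" unfolding In_def by auto
        then have "z = phi n g x" using phi_unram g by simp
        then show ?thesis using x(2) by blast
      qed
    qed
    show "phi n g ` edge_verts ends S \<subseteq> glue.VJ In (an n) (bn n) (S,g)"
    proof
      fix z assume "z \<in> phi n g ` edge_verts ends S"
      then obtain x where x: "x \<in> edge_verts ends S" "z = phi n g x" by blast
      show "z \<in> glue.VJ In (an n) (bn n) (S,g)"
      proof (cases "ramified m x")
        case True
        then have "x = u S \<or> x = w S" using ram_uw[OF S x(1)] by blast
        then show ?thesis using vj x(2) by auto
      next
        case False
        then have "z = (x,g)" using phi_unram g x(2) by simp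
        then have "z \<in> In (S,g)" unfolding In_def using x(1) False by simp
        then show ?thesis using vj by simp
      qed
    qed
  qed
qed

lemma iso_facts:
  assumes "f \<subseteq> S"
  shows "forest (layer_ends p ends m n) (f \<times> {g}) \<longleftrightarrow> forest ends f"
    "((phi n g x, phi n g y) \<in> reach (layer_ends p ends m n) (f \<times> {g})) \<longleftrightarrow> ((x,y) \<in> reach ends f)"
proof -
  have fi: "f \<times> {g} = (\<lambda>e. (e,g)) ` f" by auto
  have em: "\<forall>e\<in>f. layer_ends p ends m n ((\<lambda>e. (e,g)) e) = map_prod (phi n g) (phi n g) (ends e)"
    using layer_ends_phi by simp
  have ih: "inj_on (\<lambda>e. (e,g)) f" by (rule inj_onI) simp
  show "forest (layer_ends p ends m n) (f \<times> {g}) \<longleftrightarrow> forest ends f"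
    unfolding fi using forest_map[of f "layer_ends p ends m n" "\<lambda>e. (e,g)" "phi n g" ends] em phi_inj ih by blast
  show "((phi n g x, phi n g y) \<in> reach (layer_ends p ends m n) (f \<times> {g})) \<longleftrightarrow> ((x,y) \<in> reach ends f)"
    unfolding fi using reach_map[of f "layer_ends p ends m n" "\<lambda>e. (e,g)" "phi n g" ends x y] em phi_inj by blast
qed

lemma okconn_iso:
  assumes S: "S \<in> segs" and g: "g < p ^ n" and f: "f \<subseteq> S"
  shows "glue.ok (layer_ends p ends m n) Pn In (an n) (bn n) (S,g) (f \<times> {g}) \<longleftrightarrow> forest ends f \<and> rokX S f"
    "glue.conn (layer_ends p ends m n) (an n) (bn n) (S,g) (f \<times> {g}) \<longleftrightarrow> connX S f"
proof -
  have ok: "glue.ok (layer_ends p ends m n) Pn In (an n) (bn n) (S,g) (f \<times> {g}) \<longleftrightarrow>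
    (f \<times> {g} \<subseteq> Pn (S,g) \<and> forest (layer_ends p ends m n) (f \<times> {g}) \<and>
    (\<forall>x\<in>glue.VJ In (an n) (bn n) (S,g). (x, an n (S,g)) \<in> reach (layer_ends p ends m n) (f \<times> {g}) \<or>
       (x, bn n (S,g)) \<in> reach (layer_ends p ends m n) (f \<times> {g})))"
    using glue.ok_def[OF glue_n] by simp
  have sub: "f \<times> {g} \<subseteq> Pn (S,g)" unfolding Pn_def using f by auto
  have rk: "(\<forall>x\<in>glue.VJ In (an n) (bn n) (S,g). (x, an n (S,g)) \<in> reach (layer_ends p ends m n) (f \<times> {g}) \<or>
       (x, bn n (S,g)) \<in> reach (layer_ends p ends m n) (f \<times> {g})) \<longleftrightarrow> rokX S f"
    unfolding VJ_eq[OF S g] an_def bn_def rokX_def using iso_facts(2)[OF f] by simp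
  show "glue.ok (layer_ends p ends m n) Pn In (an n) (bn n) (S,g) (f \<times> {g}) \<longleftrightarrow> forest ends f \<and> rokX S f"
    using ok sub rk iso_facts(1)[OF f] by simp
  have cn: "glue.conn (layer_ends p ends m n) (an n) (bn n) (S,g) (f \<times> {g}) \<longleftrightarrow>
     an n (S,g) \<noteq> bn n (S,g) \<and> (an n (S,g), bn n (S,g)) \<in> reach (layer_ends p ends m n) (f \<times> {g})"
    using glue.conn_def[OF glue_n] by simp
  have "an n (S,g) \<noteq> bn n (S,g) \<longleftrightarrow> u S \<noteq> w S" unfolding an_def bn_def using phi_inj[of n g]
    by (simp add: inj_eq)
  then show "glue.conn (layer_ends p ends m n) (an n) (bn n) (S,g) (f \<times> {g}) \<longleftrightarrow> connX S f"
    unfolding cn connX_def using iso_facts(2)[OF f] unfolding an_def bn_def by simp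
qed

lemma times_g_inj: "inj_on (\<lambda>f. f \<times> {g}) A"
  by (rule inj_onI) auto

lemma sub_times_g:
  assumes F: "F \<subseteq> S \<times> {g}"
  shows "F = (fst ` F) \<times> {g} \<and> fst ` F \<subseteq> S"
proof -
  have 1: "F \<subseteq> (fst ` F) \<times> {g}"
  proof
    fix z assume z: "z \<in> F"
    obtain a b where ab: "z = (a,b)" by (cases z)
    have "b = g" using F z ab by auto
    moreover have "a \<in> fst ` F" using z ab by (metis fst_conv image_eqI)
    ultimately show "z \<in> (fst ` F) \<times> {g}" using ab by simp
  qed
  have 2: "(fst ` F) \<times> {g} \<subseteq> F"
  proof
    fix z assume "z \<in> (fst ` F) \<times> {g}"
    then obtain y where y: "y \<in> F" "fst z = fst y" "snd z = g" by auto
    have "snd y = g" using F y(1) by auto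
    then have "z = y" using y(2,3) by (simp add: prod_eq_iff)
    then show "z \<in> F" using y(1) by simp
  qed
  have 3: "fst ` F \<subseteq> S" using F by auto
  show ?thesis using 1 2 3 by blast
qed

lemma card_Cn:
  assumes S: "S \<in> segs" and g: "g < p ^ n"
  shows "card (glue.Cn (layer_ends p ends m n) Pn In (an n) (bn n) (S,g)) = card (CXs S)"
proof -
  have "glue.Cn (layer_ends p ends m n) Pn In (an n) (bn n) (S,g) = (\<lambda>f. f \<times> {g}) ` CXs S"
  proof
    show "glue.Cn (layer_ends p ends m n) Pn In (an n) (bn n) (S,g) \<subseteq> (\<lambda>f. f \<times> {g}) ` CXs S"
    proof
      fix F assume F: "F \<in> glue.Cn (layer_ends p ends m n) Pn In (an n) (bn n) (S,g)"
      then have F1: "glue.ok (layer_ends p ends m n) Pn In (an n) (bn n) (S,g) F"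
        "glue.conn (layer_ends p ends m n) (an n) (bn n) (S,g) F"
        using glue.Cn_def[OF glue_n] by auto
      then have "F \<subseteq> S \<times> {g}" using glue.ok_def[OF glue_n] unfolding Pn_def by auto
      then obtain f0 where Fe: "F = f0 \<times> {g}" "f0 \<subseteq> S" using sub_times_g by blast
      have F2: "glue.ok (layer_ends p ends m n) Pn In (an n) (bn n) (S,g) (f0 \<times> {g})"
        "glue.conn (layer_ends p ends m n) (an n) (bn n) (S,g) (f0 \<times> {g})"
        using F1 unfolding Fe(1) by simp_all
      have "f0 \<in> CXs S" unfolding CXs_def using okconn_iso[OF S g Fe(2)] F2 Fe(2) by simp
      then show "F \<in> (\<lambda>f. f \<times> {g}) ` CXs S" using Fe(1) by blast
    qed
    show "(\<lambda>f. f \<times> {g}) ` CXs S \<subseteq> glue.Cn (layer_ends p ends m n) Pn In (an n) (bn n) (S,g)"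
    proof
      fix F assume "F \<in> (\<lambda>f. f \<times> {g}) ` CXs S"
      then obtain f where f: "f \<in> CXs S" "F = f \<times> {g}" by blast
      then have fs: "f \<subseteq> S" unfolding CXs_def by simp
      show "F \<in> glue.Cn (layer_ends p ends m n) Pn In (an n) (bn n) (S,g)"
        using glue.Cn_def[OF glue_n] okconn_iso[OF S g fs] f unfolding CXs_def by auto
    qed
  qed
  then show ?thesis using card_image[OF times_g_inj] by simp
qed

lemma card_Sp:
  assumes S: "S \<in> segs" and g: "g < p ^ n"
  shows "card (glue.Sp (layer_ends p ends m n) Pn In (an n) (bn n) (S,g)) = card (SXs S)"
proof -
  have "glue.Sp (layer_ends p ends m n) Pn In (an n) (bn n) (S,g) = (\<lambda>f. f \<times> {g}) ` SXs S"
  proof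
    show "glue.Sp (layer_ends p ends m n) Pn In (an n) (bn n) (S,g) \<subseteq> (\<lambda>f. f \<times> {g}) ` SXs S"
    proof
      fix F assume F: "F \<in> glue.Sp (layer_ends p ends m n) Pn In (an n) (bn n) (S,g)"
      then have F1: "glue.ok (layer_ends p ends m n) Pn In (an n) (bn n) (S,g) F"
        "\<not> glue.conn (layer_ends p ends m n) (an n) (bn n) (S,g) F"
        using glue.Sp_def[OF glue_n] by auto
      then have "F \<subseteq> S \<times> {g}" using glue.ok_def[OF glue_n] unfolding Pn_def by auto
      then obtain f0 where Fe: "F = f0 \<times> {g}" "f0 \<subseteq> S" using sub_times_g by blast
      have F2: "glue.ok (layer_ends p ends m n) Pn In (an n) (bn n) (S,g) (f0 \<times> {g})"
        "\<not> glue.conn (layer_ends p ends m n) (an n) (bn n) (S,g) (f0 \<times> {g})"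
        using F1 unfolding Fe(1) by simp_all
      have "f0 \<in> SXs S" unfolding SXs_def using okconn_iso[OF S g Fe(2)] F2 Fe(2) by simp
      then show "F \<in> (\<lambda>f. f \<times> {g}) ` SXs S" using Fe(1) by blast
    qed
    show "(\<lambda>f. f \<times> {g}) ` SXs S \<subseteq> glue.Sp (layer_ends p ends m n) Pn In (an n) (bn n) (S,g)"
    proof
      fix F assume "F \<in> (\<lambda>f. f \<times> {g}) ` SXs S"
      then obtain f where f: "f \<in> SXs S" "F = f \<times> {g}" by blast
      then have fs: "f \<subseteq> S" unfolding SXs_def by simp
      show "F \<in> glue.Sp (layer_ends p ends m n) Pn In (an n) (bn n) (S,g)"
        using glue.Sp_def[OF glue_n] okconn_iso[OF S g fs] f unfolding SXs_def by auto
    qed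
  qed
  then show ?thesis using card_image[OF times_g_inj] by simp
qed

end

lemma count_mod:
  fixes q r g0 :: nat
  assumes q: "0 < q" and g0: "g0 < q"
  shows "card {x \<in> {0..<q*r}. x mod q = g0} = r"
proof -
  have eq: "{x \<in> {0..<q*r}. x mod q = g0} = (\<lambda>t. g0 + q*t) ` {0..<r}"
  proof
    show "{x \<in> {0..<q*r}. x mod q = g0} \<subseteq> (\<lambda>t. g0 + q*t) ` {0..<r}"
    proof
      fix x assume "x \<in> {x \<in> {0..<q*r}. x mod q = g0}"
      then have x: "x < q*r" "x mod q = g0" by auto
      have d: "x = g0 + q * (x div q)" using x(2) by (metis add.commute div_mult_mod_eq mult.commute)
      have "x div q < r" using x(1) q by (simp add: div_less_iff_less_mult mult.commute)
      then show "x \<in> (\<lambda>t. g0 + q*t) ` {0..<r}" using d by (intro image_eqI[where x="x div q"]) auto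
    qed
    show "(\<lambda>t. g0 + q*t) ` {0..<r} \<subseteq> {x \<in> {0..<q*r}. x mod q = g0}"
    proof
      fix x assume "x \<in> (\<lambda>t. g0 + q*t) ` {0..<r}"
      then obtain t where t: "t < r" "x = g0 + q*t" by auto
      have "g0 + q*t < q + q*t" using g0 by simp
      also have "\<dots> = q * (t+1)" by simp
      also have "\<dots> \<le> q * r" using t(1) by (intro mult_le_mono2) simp
      finally have "x < q*r" using t(2) by simp
      moreover have "x mod q = g0" using t(2) g0 by simp
      ultimately show "x \<in> {x \<in> {0..<q*r}. x mod q = g0}" by simp
    qed
  qed
  have "inj_on (\<lambda>t. g0 + q*t) {0..<r}" using q by (intro inj_onI) simp
  then show ?thesis unfolding eq by (simp add: card_image)
qed

lemma ram_exp_mono: "n \<le> n' \<Longrightarrow> ram_exp m n x \<le> ram_exp m n' x"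
  unfolding ram_exp_def by (cases "m x") auto

lemma ram_exp_stable: "m x = enat k \<Longrightarrow> k \<le> n \<Longrightarrow> ram_exp m n x = k"
  unfolding ram_exp_def by simp

context tower begin

lemma SX_Fcount:
  assumes S: "S \<in> segs"
  shows "card (SXs S) = F_count ends m (seg_t ends m S) S"
proof -
  define ES where "ES = edge_verts ends S"
  have uwS: "u S \<in> ES" "w S \<in> ES" "ramified m (u S)" "ramified m (w S)" using uw_props[OF S] unfolding ES_def by auto
  have ramS: "\<And>x. x \<in> ES \<Longrightarrow> ramified m x \<Longrightarrow> x = u S \<or> x = w S" using ram_uw[OF S] unfolding ES_def by blast
  have t: "seg_t ends m S = card {u S, w S}" unfolding seg_t_def using seg_props(3)[OF S] by simp
  have inES: "v \<in> ES" if T: "T \<subseteq> S" and x: "x \<in> ES" and r: "(x,v) \<in> reach ends T" for T x v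
  proof -
    have "v = x \<or> v \<in> edge_verts ends T" using reach_class_subset[OF r] .
    moreover have "edge_verts ends T \<subseteq> ES" using T unfolding ES_def edge_verts_def by auto
    ultimately show ?thesis using x by blast
  qed
  have seteq: "SXs S = {T. T \<subseteq> S \<and> forest ends T \<and>
      card (forest_components ends ES T) = seg_t ends m S \<and>
      (\<forall>C\<in>forest_components ends ES T. card {v\<in>C. ramified m v} = 1)}"
  proof
    show "SXs S \<subseteq> {T. T \<subseteq> S \<and> forest ends T \<and>
      card (forest_components ends ES T) = seg_t ends m S \<and>
      (\<forall>C\<in>forest_components ends ES T. card {v\<in>C. ramified m v} = 1)}"
    proof
      fix T assume "T \<in> SXs S"
      then have T: "T \<subseteq> S" "forest ends T" "rokX S T" "\<not> connX S T" unfolding SXs_def by auto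
      have rok: "\<forall>x\<in>ES. (x, u S) \<in> reach ends T \<or> (x, w S) \<in> reach ends T" using T(3) unfolding rokX_def ES_def .
      have nc: "u S \<noteq> w S \<Longrightarrow> (u S, w S) \<notin> reach ends T" using T(4) unfolding connX_def by blast
      have fc: "forest_components ends ES T = {reach ends T `` {u S}, reach ends T `` {w S}}"
        using fc_two[OF uwS(1,2) rok] .
      have cfc: "card (forest_components ends ES T) = (if (u S, w S) \<in> reach ends T then 1 else 2)"
        using card_fc_two[OF uwS(1,2) rok] .
      have c1: "card (forest_components ends ES T) = seg_t ends m S"
        unfolding cfc t using nc by (cases "u S = w S") auto
      have cls: "{v \<in> reach ends T `` {y}. ramified m v} = {y}" if y: "y = u S \<or> y = w S" for y
      proof
        show "{y} \<subseteq> {v \<in> reach ends T `` {y}. ramified m v}" using y uwS by auto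
        show "{v \<in> reach ends T `` {y}. ramified m v} \<subseteq> {y}"
        proof
          fix v assume "v \<in> {v \<in> reach ends T `` {y}. ramified m v}"
          then have v: "(y,v) \<in> reach ends T" "ramified m v" by auto
          have yES: "y \<in> ES" using y uwS by blast
          have "v \<in> ES" using inES[OF T(1) yES v(1)] .
          then have vuw: "v = u S \<or> v = w S" using ramS v(2) by blast
          show "v \<in> {y}"
          proof (rule ccontr)
            assume "v \<notin> {y}"
            then have "v \<noteq> y" by simp
            then have "(u S, w S) \<in> reach ends T \<and> u S \<noteq> w S"
              using y vuw v(1) reach_sym by metis
            then show False using nc by blast
          qed
        qed
      qed
      have c2: "\<forall>C\<in>forest_components ends ES T. card {v\<in>C. ramified m v} = 1"
        unfolding fc using cls by auto
      show "T \<in> {T. T \<subseteq> S \<and> forest ends T \<and>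
      card (forest_components ends ES T) = seg_t ends m S \<and>
      (\<forall>C\<in>forest_components ends ES T. card {v\<in>C. ramified m v} = 1)}"
        using T(1,2) c1 c2 by blast
    qed
    show "{T. T \<subseteq> S \<and> forest ends T \<and>
      card (forest_components ends ES T) = seg_t ends m S \<and>
      (\<forall>C\<in>forest_components ends ES T. card {v\<in>C. ramified m v} = 1)} \<subseteq> SXs S"
    proof
      fix T assume "T \<in> {T. T \<subseteq> S \<and> forest ends T \<and>
        card (forest_components ends ES T) = seg_t ends m S \<and>
        (\<forall>C\<in>forest_components ends ES T. card {v\<in>C. ramified m v} = 1)}"
      then have T: "T \<subseteq> S" "forest ends T"
        "\<forall>C\<in>forest_components ends ES T. card {v\<in>C. ramified m v} = 1" by auto
      have one: "\<exists>z. {v \<in> reach ends T `` {x}. ramified m v} = {z}" if x: "x \<in> ES" for x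
      proof -
        have "reach ends T `` {x} \<in> forest_components ends ES T" unfolding forest_components_def using x by blast
        then have "card {v \<in> reach ends T `` {x}. ramified m v} = 1" using T(3) by blast
        then show ?thesis using card_1_singletonE by metis
      qed
      have rok: "rokX S T" unfolding rokX_def
      proof
        fix x assume x: "x \<in> edge_verts ends S"
        then have xE: "x \<in> ES" unfolding ES_def .
        obtain z where z: "{v \<in> reach ends T `` {x}. ramified m v} = {z}" using one[OF xE] by blast
        then have zz: "(x,z) \<in> reach ends T" "ramified m z" by auto
        have "z \<in> ES" using inES[OF T(1) xE zz(1)] .
        then have "z = u S \<or> z = w S" using ramS zz(2) by blast
        then show "(x, u S) \<in> reach ends T \<or> (x, w S) \<in> reach ends T" using zz(1) by blast
      qed
      have nc: "\<not> connX S T"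
      proof
        assume "connX S T"
        then have c: "u S \<noteq> w S" "(u S, w S) \<in> reach ends T" unfolding connX_def by auto
        obtain z where z: "{v \<in> reach ends T `` {u S}. ramified m v} = {z}" using one[OF uwS(1)] by blast
        have m1: "u S \<in> {v \<in> reach ends T `` {u S}. ramified m v}" using uwS by simp
        have m2: "w S \<in> {v \<in> reach ends T `` {u S}. ramified m v}" using uwS c(2) by simp
        have "u S = z \<and> w S = z" using m1 m2 unfolding z by simp
        then show False using c(1) by simp
      qed
      show "T \<in> SXs S" unfolding SXs_def using T(1,2) rok nc by blast
    qed
  qed
  show ?thesis unfolding F_count_def seteq ES_def by simp
qed

lemma segs_split: "segs = segs1 E ends m \<union> segs2 E ends m"
  unfolding segs_def segments_def by auto

lemma J2_eq: "glue.J2 (Jn n) (an n) (bn n) = segs2 E ends m \<times> {0..<p^n}"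
proof -
  have "glue.J2 (Jn n) (an n) (bn n) = {j \<in> Jn n. an n j \<noteq> bn n j}" using glue.J2_def[OF glue_n] .
  also have "\<dots> = segs2 E ends m \<times> {0..<p^n}"
  proof
    show "{j \<in> Jn n. an n j \<noteq> bn n j} \<subseteq> segs2 E ends m \<times> {0..<p^n}"
    proof
      fix j assume j: "j \<in> {j \<in> Jn n. an n j \<noteq> bn n j}"
      obtain S g where Sg: "j = (S,g)" by (cases j)
      have S: "S \<in> segs" "g < p^n" using j Sg unfolding Jn_def by auto
      have "u S \<noteq> w S" using j Sg unfolding an_def bn_def by auto
      then have "S \<in> segs2 E ends m" using seg_props(4)[OF S(1)] by simp
      then show "j \<in> segs2 E ends m \<times> {0..<p^n}" using Sg S by simp
    qed
    show "segs2 E ends m \<times> {0..<p^n} \<subseteq> {j \<in> Jn n. an n j \<noteq> bn n j}"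
    proof
      fix j assume j: "j \<in> segs2 E ends m \<times> {0..<p^n}"
      obtain S g where Sg: "j = (S,g)" by (cases j)
      have S: "S \<in> segs" "S \<in> segs2 E ends m" "g < p^n" using j Sg segs_split by auto
      have "u S \<noteq> w S" using seg_props(4)[OF S(1)] S(2) by simp
      then have "an n j \<noteq> bn n j" using Sg phi_inj[of n g] unfolding an_def bn_def by (simp add: inj_eq)
      then show "j \<in> {j \<in> Jn n. an n j \<noteq> bn n j}" using Sg S unfolding Jn_def by simp
    qed
  qed
  finally show ?thesis .
qed

definition CX where "CX S = card (CXs S)"
definition SX where "SX S = card (SXs S)"
definition STn where "STn n = {\<tau>. spanning_tree (Rn n) (segs2 E ends m \<times> {0..<p^n}) (glue.eH (an n) (bn n)) \<tau>}"
definition Bs where "Bs n = (\<Sum>\<tau>\<in>STn n. \<Prod>j\<in>segs2 E ends m \<times> {0..<p^n}. (if j \<in> \<tau> then CX (fst j) else SX (fst j)))"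

lemma kappa_n0:
  "kappa_layer p V E ends m n = (\<Sum>\<tau>\<in>STn n. \<Prod>j\<in>Jn n. (if j \<in> \<tau> then CX (fst j) else SX (fst j)))"
proof -
  have "kappa_layer p V E ends m n = (\<Sum>\<tau>\<in>{\<tau>. spanning_tree (Rn n) (glue.J2 (Jn n) (an n) (bn n)) (glue.eH (an n) (bn n)) \<tau>}.
      \<Prod>j\<in>Jn n. (if j \<in> \<tau> then card (glue.Cn (layer_ends p ends m n) Pn In (an n) (bn n) j)
        else card (glue.Sp (layer_ends p ends m n) Pn In (an n) (bn n) j)))"
    unfolding kappa_layer_def kappa_def using glue.glue_count[OF glue_n] .
  also have "\<dots> = (\<Sum>\<tau>\<in>STn n. \<Prod>j\<in>Jn n. (if j \<in> \<tau> then CX (fst j) else SX (fst j)))"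
    unfolding J2_eq STn_def
  proof (intro sum.cong refl prod.cong)
    fix \<tau> j assume j: "j \<in> Jn n"
    obtain S g where Sg: "j = (S,g)" by (cases j)
    have S: "S \<in> segs" "g < p^n" using j Sg unfolding Jn_def by auto
    show "(if j \<in> \<tau> then card (glue.Cn (layer_ends p ends m n) Pn In (an n) (bn n) j)
        else card (glue.Sp (layer_ends p ends m n) Pn In (an n) (bn n) j)) =
      (if j \<in> \<tau> then CX (fst j) else SX (fst j))"
      unfolding Sg CX_def SX_def using card_Cn[OF S] card_Sp[OF S] by simp
  qed
  finally show ?thesis .
qed

lemma kappa_n:
  "kappa_layer p V E ends m n = (\<Prod>S\<in>segs1 E ends m. SX S ^ (p^n)) * Bs n"
proof -
  have fin1: "finite (segs1 E ends m \<times> {0..<p^n})" "finite (segs2 E ends m \<times> {0..<p^n})"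
    using finsegs segs_split by auto
  have Jsplit: "Jn n = (segs1 E ends m \<times> {0..<p^n}) \<union> (segs2 E ends m \<times> {0..<p^n})"
    unfolding Jn_def segs_split by auto
  have Jdisj: "(segs1 E ends m \<times> {0..<p^n}) \<inter> (segs2 E ends m \<times> {0..<p^n}) = {}"
    using segs_disjoint[OF dec] by auto
  have each: "(\<Prod>j\<in>Jn n. (if j \<in> \<tau> then CX (fst j) else SX (fst j))) =
      (\<Prod>S\<in>segs1 E ends m. SX S ^ (p^n)) * (\<Prod>j\<in>segs2 E ends m \<times> {0..<p^n}. (if j \<in> \<tau> then CX (fst j) else SX (fst j)))"
    if t: "\<tau> \<in> STn n" for \<tau>
  proof -
    have ts: "\<tau> \<subseteq> segs2 E ends m \<times> {0..<p^n}" using t unfolding STn_def spanning_tree_def by blast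
    have "(\<Prod>j\<in>Jn n. (if j \<in> \<tau> then CX (fst j) else SX (fst j))) =
      (\<Prod>j\<in>segs1 E ends m \<times> {0..<p^n}. (if j \<in> \<tau> then CX (fst j) else SX (fst j))) *
      (\<Prod>j\<in>segs2 E ends m \<times> {0..<p^n}. (if j \<in> \<tau> then CX (fst j) else SX (fst j)))"
      unfolding Jsplit using prod.union_disjoint[OF fin1 Jdisj] by blast
    moreover have "(\<Prod>j\<in>segs1 E ends m \<times> {0..<p^n}. (if j \<in> \<tau> then CX (fst j) else SX (fst j))) =
        (\<Prod>j\<in>segs1 E ends m \<times> {0..<p^n}. SX (fst j))"
      using ts Jdisj by (intro prod.cong refl) auto
    moreover have "(\<Prod>j\<in>segs1 E ends m \<times> {0..<p^n}. SX (fst j)) = (\<Prod>S\<in>segs1 E ends m. SX S ^ (p^n))"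
    proof -
      have "(\<Prod>j\<in>segs1 E ends m \<times> {0..<p^n}. SX (fst j)) = (\<Prod>(S,g)\<in>segs1 E ends m \<times> {0..<p^n}. SX S)"
        by (rule prod.cong) auto
      also have "\<dots> = (\<Prod>S\<in>segs1 E ends m. \<Prod>g\<in>{0..<p^n}. SX S)"
        by (rule prod.cartesian_product[symmetric])
      also have "\<dots> = (\<Prod>S\<in>segs1 E ends m. SX S ^ (p^n))" by simp
      finally show ?thesis .
    qed
    ultimately show ?thesis by simp
  qed
  have "kappa_layer p V E ends m n = (\<Sum>\<tau>\<in>STn n. (\<Prod>S\<in>segs1 E ends m. SX S ^ (p^n)) *
      (\<Prod>j\<in>segs2 E ends m \<times> {0..<p^n}. (if j \<in> \<tau> then CX (fst j) else SX (fst j))))"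
    unfolding kappa_n0 using each by (rule sum.cong[OF refl])
  also have "\<dots> = (\<Prod>S\<in>segs1 E ends m. SX S ^ (p^n)) * Bs n"
    unfolding Bs_def by (simp add: sum_distrib_left)
  finally show ?thesis .
qed

end

context tower begin

lemma ram_bound:
  assumes hl: "\<forall>n\<ge>n0. card (Rn n) = l"
  shows "\<forall>x\<in>V. ramified m x \<longrightarrow> (\<exists>k. m x = enat k \<and> k \<le> n0)"
proof (intro ballI impI)
  fix x assume x: "x \<in> V" "ramified m x"
  then obtain k where k: "m x = enat k" unfolding ramified_def by (cases "m x") auto
  show "\<exists>k. m x = enat k \<and> k \<le> n0"
  proof (rule ccontr)
    assume "\<not> (\<exists>k. m x = enat k \<and> k \<le> n0)"
    then have kn: "k > n0" using k by auto
    have sub: "Rn n0 \<subseteq> Rn (Suc n0)"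
    proof
      fix z assume z: "z \<in> Rn n0"
      obtain v a where va: "z = (v,a)" by (cases z)
      have a: "a < p ^ ram_exp m n0 v" "v \<in> V" "ramified m v" using z va unfolding Rn_def layer_verts_def by auto
      have "ram_exp m n0 v \<le> ram_exp m (Suc n0) v" by (rule ram_exp_mono) simp
      then have "p ^ ram_exp m n0 v \<le> p ^ ram_exp m (Suc n0) v" using p_pos by (intro power_increasing) auto
      then show "z \<in> Rn (Suc n0)" using a va unfolding Rn_def layer_verts_def by auto
    qed
    have e1: "ram_exp m (Suc n0) x = Suc n0" unfolding ram_exp_def using k kn by simp
    have e0: "ram_exp m n0 x = n0" unfolding ram_exp_def using k kn by simp
    have "p ^ n0 < p ^ Suc n0" using p2 by simp
    then have new: "(x, p^n0) \<in> Rn (Suc n0)" unfolding Rn_def layer_verts_def using x e1 by simp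
    have notin: "(x, p^n0) \<notin> Rn n0" unfolding Rn_def layer_verts_def using e0 by simp
    have fin: "finite (Rn (Suc n0))" using glue.finR[OF glue_n] .
    have "Rn n0 \<subset> Rn (Suc n0)" using sub new notin by blast
    then have "card (Rn n0) < card (Rn (Suc n0))" using psubset_card_mono[OF fin] by blast
    moreover have "card (Rn n0) = l" "card (Rn (Suc n0)) = l" using hl by auto
    ultimately show False by simp
  qed
qed

lemma Rn_stable:
  assumes bnd: "\<forall>x\<in>V. ramified m x \<longrightarrow> (\<exists>k. m x = enat k \<and> k \<le> n0)" and n: "n0 \<le> n"
  shows "Rn n = Rn n0"
proof -
  have "ram_exp m n v = ram_exp m n0 v" if vv: "v \<in> V" "ramified m v" for v
  proof -
    obtain k where k: "m v = enat k" "k \<le> n0" using bnd vv by blast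
    then show ?thesis using ram_exp_stable[of m v k n] ram_exp_stable[of m v k n0] n by simp
  qed
  then show ?thesis unfolding Rn_def layer_verts_def by auto
qed

lemma phi_stable:
  assumes bnd: "\<forall>x\<in>V. ramified m x \<longrightarrow> (\<exists>k. m x = enat k \<and> k \<le> n0)" and n: "n0 \<le> n"
    and x: "x \<in> V" "ramified m x"
  shows "phi n g x = phi n0 (g mod p^n0) x"
proof -
  obtain k where k: "m x = enat k" "k \<le> n0" using bnd x by blast
  have r: "ram_exp m n x = k" "ram_exp m n0 x = k" using ram_exp_stable[of m x k n] ram_exp_stable[of m x k n0] k n by auto
  have "p ^ k dvd p ^ n0" using k(2) by (rule le_imp_power_dvd)
  then have "g mod p ^ n0 mod p ^ k = g mod p ^ k" by (rule mod_mod_cancel)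
  then show ?thesis unfolding phi_def r by simp
qed

lemma Bs_scale:
  assumes bnd: "\<forall>x\<in>V. ramified m x \<longrightarrow> (\<exists>k. m x = enat k \<and> k \<le> n0)" and n: "n0 \<le> n"
  shows "Bs n = (p^(n-n0)) ^ (card (Rn n0) - 1) *
     (\<Prod>S\<in>segs2 E ends m. SX S ^ ((p^(n-n0) - 1) * p^n0)) * Bs n0"
proof -
  define c where "c = p^(n-n0)"
  define E1 where "E1 = segs2 E ends m \<times> {0..<p^n}"
  define E0 where "E0 = segs2 E ends m \<times> {0..<p^n0}"
  define \<pi> where "\<pi> j = (fst j, snd j mod p^n0)" for j :: "'e set \<times> nat"
  define eH1 where "eH1 = glue.eH (an n) (bn n)"
  define eH0 where "eH0 = glue.eH (an n0) (bn n0)"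
  define C where "C j = CX (fst j)" for j :: "'e set \<times> nat"
  define F where "F j = SX (fst j)" for j :: "'e set \<times> nat"
  have s2: "segs2 E ends m \<subseteq> segs" using segs_split by auto
  have finR: "finite (Rn n0)" using glue.finR[OF glue_n] .
  have finE0: "finite E0" "finite E1" unfolding E0_def E1_def using finsegs s2 finite_subset by auto
  have im: "\<pi> ` E1 \<subseteq> E0" unfolding E0_def E1_def \<pi>_def using p_pos by auto
  have pn: "p^n0 * p^(n-n0) = p^n" using n by (simp add: power_add[symmetric])
  have fib: "\<forall>j\<in>E0. card {j'\<in>E1. \<pi> j' = j} = c"
  proof
    fix j assume j: "j \<in> E0"
    obtain S g0 where Sg: "j = (S,g0)" by (cases j)
    have S: "S \<in> segs2 E ends m" "g0 < p^n0" using j Sg unfolding E0_def by auto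
    have "{j'\<in>E1. \<pi> j' = j} = {S} \<times> {x \<in> {0..<p^n0 * p^(n-n0)}. x mod p^n0 = g0}"
      unfolding E1_def \<pi>_def Sg pn using S by auto
    then have "card {j'\<in>E1. \<pi> j' = j} = card {x \<in> {0..<p^n0 * p^(n-n0)}. x mod p^n0 = g0}"
      by (simp add: card_cartesian_product)
    also have "\<dots> = p^(n-n0)" using count_mod[of "p^n0" g0 "p^(n-n0)"] p_pos S(2) by simp
    finally show "card {j'\<in>E1. \<pi> j' = j} = c" unfolding c_def .
  qed
  have c1: "c \<ge> 1" unfolding c_def using p_pos by simp
  have eq: "\<forall>j\<in>E1. eH1 j = eH0 (\<pi> j)"
  proof
    fix j assume j: "j \<in> E1"
    obtain S g where Sg: "j = (S,g)" by (cases j)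
    have S: "S \<in> segs" "g < p^n" using j Sg s2 unfolding E1_def by auto
    have uV: "u S \<in> V" "w S \<in> V" using uw_props[OF S(1)] ev_sub[OF S(1)] by auto
    have "eH1 j = (an n j, bn n j)" unfolding eH1_def using glue.eH_def[OF glue_n] by simp
    moreover have "eH0 (\<pi> j) = (an n0 (\<pi> j), bn n0 (\<pi> j))" unfolding eH0_def using glue.eH_def[OF glue_n] by simp
    moreover have "an n j = an n0 (\<pi> j)" "bn n j = bn n0 (\<pi> j)"
      unfolding an_def bn_def \<pi>_def Sg using phi_stable[OF bnd n] uV uw_props[OF S(1)] by auto
    ultimately show "eH1 j = eH0 (\<pi> j)" by simp
  qed
  have eR: "\<forall>j\<in>E0. eH0 j \<in> Rn n0 \<times> Rn n0"
  proof
    fix j assume j: "j \<in> E0"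
    then have "j \<in> Jn n0" unfolding E0_def Jn_def using s2 by auto
    then have "an n0 j \<in> Rn n0 \<and> bn n0 j \<in> Rn n0" using glue.abR[OF glue_n] by blast
    moreover have "eH0 j = (an n0 j, bn n0 j)" unfolding eH0_def using glue.eH_def[OF glue_n] by simp
    ultimately show "eH0 j \<in> Rn n0 \<times> Rn n0" by simp
  qed
  note sc = scale[OF finR Rn_ne finE0(1) finE0(2) im fib c1 eq eR, of C F]
  have lhs: "Bs n = (\<Sum>\<tau>'\<in>{\<tau>'. spanning_tree (Rn n0) E1 eH1 \<tau>'}. \<Prod>j'\<in>E1. if j' \<in> \<tau>' then C (\<pi> j') else F (\<pi> j'))"
    unfolding Bs_def STn_def Rn_stable[OF bnd n] E1_def eH1_def C_def F_def \<pi>_def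
    by (rule sum.cong[OF refl], rule prod.cong[OF refl]) simp
  have rhs: "Bs n0 = (\<Sum>\<tau>\<in>{\<tau>. spanning_tree (Rn n0) E0 eH0 \<tau>}. \<Prod>j\<in>E0. if j \<in> \<tau> then C j else F j)"
    unfolding Bs_def STn_def E0_def eH0_def C_def F_def by simp
  have K: "(\<Prod>j\<in>E0. F j ^ (c - 1)) = (\<Prod>S\<in>segs2 E ends m. SX S ^ ((c - 1) * p^n0))"
  proof -
    have "(\<Prod>j\<in>E0. F j ^ (c - 1)) = (\<Prod>(S,g)\<in>segs2 E ends m \<times> {0..<p^n0}. SX S ^ (c - 1))"
      unfolding E0_def F_def by (rule prod.cong) auto
    also have "\<dots> = (\<Prod>S\<in>segs2 E ends m. \<Prod>g\<in>{0..<p^n0}. SX S ^ (c - 1))"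
      by (rule prod.cartesian_product[symmetric])
    also have "\<dots> = (\<Prod>S\<in>segs2 E ends m. SX S ^ ((c - 1) * p^n0))" by (simp add: power_mult)
    finally show ?thesis .
  qed
  have X: "Bs n = c ^ (card (Rn n0) - 1) * (\<Prod>S\<in>segs2 E ends m. SX S ^ ((c - 1) * p^n0)) * Bs n0"
    using sc lhs rhs K by simp
  then show ?thesis unfolding c_def .
qed

end

theorem theorem5p18:
  fixes V :: "'v set" and E :: "'e set" and ends :: "'e \<Rightarrow> 'v \<times> 'v"
    and m :: "'v \<Rightarrow> enat" and p n0 l :: nat
  assumes "prime p"
    and "is_graph V E ends"
    and "connected_graph V E ends"
    and "\<forall>v\<in>V. \<not> is_tail V E ends m v"
    and "\<exists>v\<in>V. totally_ramified m v"
    and "has_segment_decomposition V E ends m"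
    and "\<forall>n\<ge>n0. card {x \<in> layer_verts p V m n. ramified m (fst x)} = l"
  shows "\<forall>n\<ge>n0. kappa_layer p V E ends m n =
           kappa_layer p V E ends m n0 * p ^ ((n - n0) * (l - 1)) *
           (\<Prod>S\<in>segments E ends m. F_count ends m (seg_t ends m S) S ^ (p ^ n - p ^ n0))"
proof -
  have p2: "p \<ge> 2" using assms(1) by (rule prime_ge_2_nat)
  interpret T: tower p V E ends m
    by (rule tower.intro[OF p2 assms(2) assms(5) assms(6)])
  have hl: "\<forall>n\<ge>n0. card (T.Rn n) = l" using assms(7) unfolding T.Rn_def .
  have bnd: "\<forall>x\<in>V. ramified m x \<longrightarrow> (\<exists>k. m x = enat k \<and> k \<le> n0)" using T.ram_bound[OF hl] .
  have cR: "card (T.Rn n0) = l" using hl by simp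
  show ?thesis
  proof (intro allI impI)
    fix n assume n: "n0 \<le> n"
    define s1 where "s1 = segs1 E ends m"
    define s2 where "s2 = segs2 E ends m"
    define c where "c = p ^ (n - n0)"
    define d where "d = p ^ n - p ^ n0"
    have pn: "p ^ n = c * p ^ n0" unfolding c_def using n by (simp add: power_add[symmetric])
    have dd: "(c - 1) * p ^ n0 = d" unfolding d_def pn by (simp add: diff_mult_distrib)
    have pnd: "p ^ n = p ^ n0 + d"
    proof -
      have "p ^ n0 \<le> p ^ n" using n T.p_pos by (intro power_increasing) auto
      then show ?thesis unfolding d_def by simp
    qed
    have fin12: "finite s1" "finite s2" using T.finsegs T.segs_split unfolding s1_def s2_def by auto
    have disj: "s1 \<inter> s2 = {}" using segs_disjoint[OF assms(6)] unfolding s1_def s2_def .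
    have segeq: "segments E ends m = s1 \<union> s2" using T.segs_split unfolding T.segs_def s1_def s2_def .
    have Fc: "F_count ends m (seg_t ends m S) S = T.SX S" if "S \<in> segments E ends m" for S
      using T.SX_Fcount[of S] that unfolding T.SX_def T.segs_def by simp
    have prodF: "(\<Prod>S\<in>segments E ends m. F_count ends m (seg_t ends m S) S ^ d) =
        (\<Prod>S\<in>s1. T.SX S ^ d) * (\<Prod>S\<in>s2. T.SX S ^ d)"
    proof -
      have "(\<Prod>S\<in>segments E ends m. F_count ends m (seg_t ends m S) S ^ d) = (\<Prod>S\<in>s1 \<union> s2. T.SX S ^ d)"
        unfolding segeq[symmetric] using Fc by (intro prod.cong refl) simp
      also have "\<dots> = (\<Prod>S\<in>s1. T.SX S ^ d) * (\<Prod>S\<in>s2. T.SX S ^ d)"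
        using prod.union_disjoint[OF fin12 disj] .
      finally show ?thesis .
    qed
    have A1: "(\<Prod>S\<in>s1. T.SX S ^ (p ^ n)) = (\<Prod>S\<in>s1. T.SX S ^ (p ^ n0)) * (\<Prod>S\<in>s1. T.SX S ^ d)"
      unfolding pnd power_add by (rule prod.distrib)
    have Kn: "kappa_layer p V E ends m n = (\<Prod>S\<in>s1. T.SX S ^ (p ^ n)) * T.Bs n"
      using T.kappa_n unfolding s1_def .
    have K0: "kappa_layer p V E ends m n0 = (\<Prod>S\<in>s1. T.SX S ^ (p ^ n0)) * T.Bs n0"
      using T.kappa_n unfolding s1_def .
    have Bn: "T.Bs n = c ^ (l - 1) * (\<Prod>S\<in>s2. T.SX S ^ d) * T.Bs n0"
      using T.Bs_scale[OF bnd n] unfolding cR dd[symmetric] c_def s2_def .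
    have cp: "c ^ (l - 1) = p ^ ((n - n0) * (l - 1))" unfolding c_def by (simp add: power_mult)
    have "kappa_layer p V E ends m n =
        (\<Prod>S\<in>s1. T.SX S ^ (p ^ n0)) * T.Bs n0 * c ^ (l - 1) * ((\<Prod>S\<in>s1. T.SX S ^ d) * (\<Prod>S\<in>s2. T.SX S ^ d))"
      unfolding Kn A1 Bn by (simp add: ac_simps)
    also have "\<dots> = kappa_layer p V E ends m n0 * p ^ ((n - n0) * (l - 1)) *
           (\<Prod>S\<in>segments E ends m. F_count ends m (seg_t ends m S) S ^ (p ^ n - p ^ n0))"
      unfolding K0 cp prodF[unfolded d_def, symmetric] d_def ..
    finally show "kappa_layer p V E ends m n =
           kappa_layer p V E ends m n0 * p ^ ((n - n0) * (l - 1)) *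
           (\<Prod>S\<in>segments E ends m. F_count ends m (seg_t ends m S) S ^ (p ^ n - p ^ n0))" .
  qed
qed

end
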